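(* With probability one there exists $n_0$ such that for every $n\ge n_0$ the function $\mathbb R^3\ni(\alpha',\theta_1',\theta_2')\mapsto Q_n(\mathbf Y_n;\alpha',\theta_1',\theta_2')$ has a unique global minimizer $(\tilde\alpha_n,\tilde\theta_{1,n},\tilde\theta_{2,n})$, given by $$\tilde\alpha_n=\frac{\sum_{k=1,k\notin\{s_1,s_2\}}^n(Y_k-\mu_\varepsilon)Y_{k-1}}{\sum_{k=1,k\notin\{s_1,s_2\}}^nY_{k-1}^2},\qquad \tilde\theta_{i,n}=Y_{s_i}-\tilde\alpha_nY_{s_i-1}-\mu_\varepsilon\ (i=1,2).$$ Moreover, for every $(\alpha,\theta_1,\theta_2)\in(0,1)\times\mathbb N^2$, almost surely $\tilde\alpha_n\to\alpha$ and $\tilde\theta_{i,n}\to Y_{s_i}-\alpha Y_{s_i-1}-\mu_\varepsilon$ for $i=1,2$.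
   Context: INAR(1) with two innovational outliers: Let $\alpha\in(0,1)$. Let $(\varepsilon_k)_{k\in\mathbb N}$ be i.i.d. non-negative integer-valued random variables with $\mathbb E\varepsilon_1^2<\infty$ and $\mathbb P(\varepsilon_1\ne 0)>0$; write $\mu_\varepsilon=\mathbb E\varepsilon_1$ (assumed known). For each $k\in\mathbb N$ let $(\xi_{k,j})_{j\in\mathbb N}$ be i.i.d. Bernoulli random variables with mean $\alpha$, these sequences being mutually independent and independent of $(\varepsilon_k)$. Fix known times $s_1\neq s_2$ in $\mathbb N$ and sizes $\theta_1,\theta_2\in\mathbb N$. Let $Y_0$ be a non-negative integer-valued random variable with $\mathbb E Y_0^2<\infty$, independent of all $\xi_{k,j},\varepsilon_k$, and $Y_k=\sum_{j=1}^{Y_{k-1}}\xi_{k,j}+\varepsilon_k+\delta_{k,s_1}\theta_1+\delta_{k,s_2}\theta_2$, $k\in\mathbb N$. Write $\mathbf Y_n=(Y_0,\dots,Y_n)$. For $n\ge\max(s_1,s_2)$, $$Q_n(\mathbf y_n;\alpha',\theta_1',\theta_2')=\sum_{\substack{k=1\\k\notin\{s_1,s_2\}}}^n(y_k-\alpha'y_{k-1}-\mu_\varepsilon)^2+\sum_{i=1}^2(y_{s_i}-\alpha'y_{s_i-1}-\mu_\varepsilon-\theta_i')^2 .$$ *)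

theory Defs
  imports "HOL-Probability.Probability"
begin

text \<open>Index type for the whole family of primitive random variables:
  the initial value Y0, the innovations eps_k (k >= 1) and the thinning
  Bernoulli variables xi_{k,j} (k, j >= 1).\<close>
datatype inar_idx = IY0 | IEps nat | IXi nat nat

definition inar_index_set :: "inar_idx set" where
  "inar_index_set = {IY0} \<union> {IEps k | k. k \<ge> 1} \<union> {IXi k j | k j. k \<ge> 1 \<and> j \<ge> 1}"

fun inar_family :: "('a \<Rightarrow> nat) \<Rightarrow> (nat \<Rightarrow> 'a \<Rightarrow> nat) \<Rightarrow> (nat \<Rightarrow> nat \<Rightarrow> 'a \<Rightarrow> nat)
    \<Rightarrow> inar_idx \<Rightarrow> 'a \<Rightarrow> nat" where
  "inar_family Y0 eps xi IY0 = Y0"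
| "inar_family Y0 eps xi (IEps k) = eps k"
| "inar_family Y0 eps xi (IXi k j) = xi k j"

fun inar_Y :: "('a \<Rightarrow> nat) \<Rightarrow> (nat \<Rightarrow> 'a \<Rightarrow> nat) \<Rightarrow> (nat \<Rightarrow> nat \<Rightarrow> 'a \<Rightarrow> nat)
    \<Rightarrow> nat \<Rightarrow> nat \<Rightarrow> nat \<Rightarrow> nat \<Rightarrow> nat \<Rightarrow> 'a \<Rightarrow> nat" where
  "inar_Y Y0 eps xi s1 s2 th1 th2 0 \<omega> = Y0 \<omega>"
| "inar_Y Y0 eps xi s1 s2 th1 th2 (Suc k) \<omega> =
     (\<Sum>j\<in>{1..inar_Y Y0 eps xi s1 s2 th1 th2 k \<omega>}. xi (Suc k) j \<omega>) + eps (Suc k) \<omega>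
     + (if Suc k = s1 then th1 else 0) + (if Suc k = s2 then th2 else 0)"

definition inar_Q :: "nat \<Rightarrow> nat \<Rightarrow> real \<Rightarrow> nat \<Rightarrow> (nat \<Rightarrow> real) \<Rightarrow> real \<Rightarrow> real \<Rightarrow> real \<Rightarrow> real" where
  "inar_Q s1 s2 \<mu> n y a t1 t2 =
     (\<Sum>k\<in>{1..n} - {s1, s2}. (y k - a * y (k - 1) - \<mu>)\<^sup>2)
     + (y s1 - a * y (s1 - 1) - \<mu> - t1)\<^sup>2 + (y s2 - a * y (s2 - 1) - \<mu> - t2)\<^sup>2"

definition inar_alpha_tilde :: "nat \<Rightarrow> nat \<Rightarrow> real \<Rightarrow> nat \<Rightarrow> (nat \<Rightarrow> real) \<Rightarrow> real" where
  "inar_alpha_tilde s1 s2 \<mu> n y =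
     (\<Sum>k\<in>{1..n} - {s1, s2}. (y k - \<mu>) * y (k - 1)) / (\<Sum>k\<in>{1..n} - {s1, s2}. (y (k - 1))\<^sup>2)"

definition inar_theta_tilde :: "nat \<Rightarrow> nat \<Rightarrow> real \<Rightarrow> nat \<Rightarrow> (nat \<Rightarrow> real) \<Rightarrow> nat \<Rightarrow> real" where
  "inar_theta_tilde s1 s2 \<mu> n y s = y s - inar_alpha_tilde s1 s2 \<mu> n y * y (s - 1) - \<mu>"

end

theory Submission
  imports Defs
begin

primrec Yf :: "nat \<Rightarrow> nat \<Rightarrow> nat \<Rightarrow> nat \<Rightarrow> nat \<Rightarrow> (inar_idx \<Rightarrow> nat) \<Rightarrow> nat" where
  "Yf s1 s2 th1 th2 0 f = f IY0"
| "Yf s1 s2 th1 th2 (Suc k) f = (\<Sum>j\<in>{1..Yf s1 s2 th1 th2 k f}. f (IXi (Suc k) j)) + f (IEps (Suc k))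
     + (if Suc k = s1 then th1 else 0) + (if Suc k = s2 then th2 else 0)"

lemma inar_Y_Yf: "inar_Y Y0 eps xi s1 s2 th1 th2 k \<omega> = Yf s1 s2 th1 th2 k (\<lambda>i. inar_family Y0 eps xi i \<omega>)"
  by (induction k) auto

lemma meas_nat_count: 
  fixes f g :: "'b \<Rightarrow> nat"
  assumes "f \<in> measurable N (count_space UNIV)" "g \<in> measurable N (count_space UNIV)"
  shows "(\<lambda>x. f x + g x) \<in> measurable N (count_space UNIV)"
proof -
  have "(\<lambda>x. (f x, g x)) \<in> measurable N (count_space UNIV \<Otimes>\<^sub>M count_space UNIV)"
    using assms by measurable
  then have "(\<lambda>x. (f x, g x)) \<in> measurable N (count_space UNIV)"
    by (simp add: pair_measure_countable)
  have gen: "\<And>h. h \<in> measurable N (count_space (UNIV::(nat\<times>nat) set)) \<Longrightarrow> (\<lambda>x. case h x of (a,b) \<Rightarrow> a+b) \<in> measurable N (count_space UNIV)"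
  proof -
    fix h assume h: "h \<in> measurable N (count_space (UNIV::(nat\<times>nat) set))"
    have "(\<lambda>(a,b). a+b) \<in> measurable (count_space (UNIV::(nat\<times>nat) set)) (count_space (UNIV::nat set))" by simp
    from measurable_compose[OF h this] show "(\<lambda>x. case h x of (a,b) \<Rightarrow> a+b) \<in> measurable N (count_space UNIV)" .
  qed
  from gen[OF \<open>(\<lambda>x. (f x, g x)) \<in> measurable N (count_space UNIV)\<close>] show ?thesis by simp
qed

lemma meas_sum_count:
  fixes f :: "nat \<Rightarrow> 'b \<Rightarrow> nat"
  assumes "\<And>j. j \<ge> 1 \<Longrightarrow> f j \<in> measurable N (count_space UNIV)"
  shows "(\<lambda>x. \<Sum>j\<in>{1..n}. f j x) \<in> measurable N (count_space UNIV)"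
proof (induction n)
  case 0 then show ?case by simp
next
  case (Suc n)
  have "(\<lambda>x. \<Sum>j\<in>{1..Suc n}. f j x) = (\<lambda>x. (\<Sum>j\<in>{1..n}. f j x) + f (Suc n) x)"
    by (auto simp: add.commute)
  then show ?case using meas_nat_count[OF Suc assms[of "Suc n"]] by simp
qed

lemma meas_Yf:
  assumes "\<And>i. i \<in> inar_index_set \<Longrightarrow> (\<lambda>f. f i) \<in> measurable N (count_space UNIV)"
  shows "Yf s1 s2 th1 th2 k \<in> measurable N (count_space UNIV)"
proof (induction k)
  case 0 then show ?case using assms by (simp add: inar_index_set_def)
next
  case (Suc k)
  have A: "(\<lambda>f. \<Sum>j\<in>{1..n}. f (IXi (Suc k) j)) \<in> measurable N (count_space UNIV)" for n
    by (rule meas_sum_count) (simp add: assms inar_index_set_def)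
  have B: "(\<lambda>f. f (IEps (Suc k))) \<in> measurable N (count_space UNIV)"
    by (simp add: assms inar_index_set_def)
  have C: "(\<lambda>f. (\<Sum>j\<in>{1..Yf s1 s2 th1 th2 k f}. f (IXi (Suc k) j))) \<in> measurable N (count_space UNIV)"
    using measurable_compose_countable'[where f="\<lambda>n f. \<Sum>j\<in>{1..n}. f (IXi (Suc k) j)" and g="Yf s1 s2 th1 th2 k", OF A Suc]
    by simp
  show ?case
    by (simp only: Yf.simps) (intro meas_nat_count C B measurable_const; simp)
qed

definition Past :: "nat \<Rightarrow> inar_idx set" where
  "Past k = {IY0} \<union> {IEps i | i. 1 \<le> i \<and> i \<le> k} \<union> {IXi i j | i j. 1 \<le> i \<and> i \<le> k \<and> 1 \<le> j}"

definition Blk :: "nat \<Rightarrow> inar_idx set" where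
  "Blk k = {IEps k} \<union> {IXi k j | j. 1 \<le> j}"

abbreviation Om :: "(inar_idx \<Rightarrow> nat) measure" where
  "Om \<equiv> PiM inar_index_set (\<lambda>_. count_space UNIV)"

definition mixk :: "nat \<Rightarrow> (inar_idx \<Rightarrow> nat) \<Rightarrow> (inar_idx \<Rightarrow> nat) \<Rightarrow> (inar_idx \<Rightarrow> nat)" where
  "mixk k f g = restrict (\<lambda>i. if i \<in> Past (k - 1) then f i else if i \<in> Blk k then g i else 0) inar_index_set"

lemma Past_Blk: "k \<ge> 1 \<Longrightarrow> Past k = Past (k - 1) \<union> Blk k"
  unfolding Past_def Blk_def by (cases k) (auto simp: le_Suc_eq)

lemma Past_Blk_disj: "k \<ge> 1 \<Longrightarrow> Past (k - 1) \<inter> Blk k = {}"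
  unfolding Past_def Blk_def by auto

lemma Past_sub: "Past k \<subseteq> inar_index_set"
  unfolding Past_def inar_index_set_def by auto

lemma Blk_sub: "k \<ge> 1 \<Longrightarrow> Blk k \<subseteq> inar_index_set"
  unfolding Blk_def inar_index_set_def by auto

lemma Past_mono: "k \<le> m \<Longrightarrow> Past k \<subseteq> Past m"
  unfolding Past_def by auto

lemma meas_comp_Om: "i \<in> inar_index_set \<Longrightarrow> (\<lambda>f. f i) \<in> measurable Om (count_space UNIV)"
  by (rule measurable_component_singleton)

lemma meas_Yf_Om[measurable]: "Yf s1 s2 th1 th2 k \<in> measurable Om (count_space UNIV)"
  by (rule meas_Yf) (rule meas_comp_Om)

lemma Yf_dep: "(\<And>i. i \<in> Past k \<Longrightarrow> f i = g i) \<Longrightarrow> Yf s1 s2 th1 th2 k f = Yf s1 s2 th1 th2 k g"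
proof (induction k)
  case 0 then show ?case by (simp add: Past_def)
next
  case (Suc k)
  have "Past k \<subseteq> Past (Suc k)" by (rule Past_mono) simp
  then have IH: "Yf s1 s2 th1 th2 k f = Yf s1 s2 th1 th2 k g" using Suc by blast
  have "f (IXi (Suc k) j) = g (IXi (Suc k) j)" if "j \<ge> 1" for j
    using Suc.prems[of "IXi (Suc k) j"] that by (auto simp: Past_def)
  moreover have "f (IEps (Suc k)) = g (IEps (Suc k))"
    using Suc.prems by (auto simp: Past_def)
  ultimately show ?case by (simp add: IH)
qed

lemma mixk_meas:
  assumes "k \<ge> 1"
  shows "(\<lambda>x. restrict (\<lambda>i. case x of (w, v) \<Rightarrow> if i \<in> Past (k - 1) then w i else if i \<in> Blk k then v i else 0) inar_index_set)
     \<in> measurable (PiM (Past (k - 1)) (\<lambda>_. count_space UNIV) \<Otimes>\<^sub>M PiM (Blk k) (\<lambda>_. count_space UNIV)) Om"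
proof (rule measurable_restrict)
  fix i assume "i \<in> inar_index_set"
  show "(\<lambda>x. case x of (w, v) \<Rightarrow> if i \<in> Past (k - 1) then w i else if i \<in> Blk k then v i else 0)
         \<in> measurable (PiM (Past (k - 1)) (\<lambda>_. count_space UNIV) \<Otimes>\<^sub>M PiM (Blk k) (\<lambda>_. count_space UNIV)) (count_space UNIV)"
  proof (cases "i \<in> Past (k - 1)")
    case True
    then show ?thesis by (simp add: case_prod_beta) measurable
  next
    case False
    show ?thesis
    proof (cases "i \<in> Blk k")
      case True
      then show ?thesis using False by (simp add: case_prod_beta) measurable
    next
      case F2: False
      then show ?thesis using False by (simp add: case_prod_beta)
    qed
  qed
qed

locale inar = prob_space M for M :: "'a measure" +
  fixes Y0 :: "'a \<Rightarrow> nat" and eps :: "nat \<Rightarrow> 'a \<Rightarrow> nat" and xi :: "nat \<Rightarrow> nat \<Rightarrow> 'a \<Rightarrow> nat"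
    and \<alpha> :: real and \<mu> :: real and s1 s2 \<theta>1 \<theta>2 :: nat
  assumes alpha: "\<alpha> \<in> {0<..<1}"
    and s1: "s1 \<ge> 1" and s2: "s2 \<ge> 1" and s12: "s1 \<noteq> s2" and th1: "\<theta>1 \<ge> 1" and th2: "\<theta>2 \<ge> 1"
    and indep: "indep_vars (\<lambda>_. count_space UNIV) (inar_family Y0 eps xi) inar_index_set"
    and eps_ident: "\<And>k. k \<ge> 1 \<Longrightarrow> distr M (count_space UNIV) (eps k) = distr M (count_space UNIV) (eps 1)"
    and eps_sq: "integrable M (\<lambda>\<omega>. (real (eps 1 \<omega>))\<^sup>2)"
    and eps_nz: "measure M {\<omega> \<in> space M. eps 1 \<omega> \<noteq> 0} > 0"
    and mu_def: "\<mu> = integral\<^sup>L M (\<lambda>\<omega>. real (eps 1 \<omega>))"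
    and xi_bern: "\<And>k j. k \<ge> 1 \<Longrightarrow> j \<ge> 1 \<Longrightarrow>
        distr M (count_space UNIV) (xi k j) = measure_pmf (map_pmf (\<lambda>b. if b then 1 else 0) (bernoulli_pmf \<alpha>))"
    and Y0_sq: "integrable M (\<lambda>\<omega>. (real (Y0 \<omega>))\<^sup>2)"
begin

abbreviation X where "X \<equiv> inar_family Y0 eps xi"

definition fam :: "'a \<Rightarrow> inar_idx \<Rightarrow> nat" where
  "fam \<omega> = restrict (\<lambda>i. X i \<omega>) inar_index_set"

lemma X_meas: "i \<in> inar_index_set \<Longrightarrow> X i \<in> measurable M (count_space UNIV)"
  using indep unfolding indep_vars_def by auto

lemma fam_meas[measurable]: "fam \<in> measurable M Om"
  unfolding fam_def by (rule measurable_restrict) (rule X_meas)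

abbreviation Y where "Y k \<omega> \<equiv> Yf s1 s2 \<theta>1 \<theta>2 k (fam \<omega>)"

lemma Y_eq: "inar_Y Y0 eps xi s1 s2 \<theta>1 \<theta>2 k \<omega> = Y k \<omega>"
  unfolding inar_Y_Yf by (rule Yf_dep) (use Past_sub in \<open>auto simp: fam_def\<close>)

lemma core_nn:
  fixes F :: "(inar_idx \<Rightarrow> nat) \<Rightarrow> ennreal"
  assumes k: "k \<ge> 1" and Fm: "F \<in> borel_measurable Om"
    and dep: "\<And>f g. (\<And>i. i \<in> Past k \<Longrightarrow> f i = g i) \<Longrightarrow> F f = F g"
  shows "(\<integral>\<^sup>+\<omega>. F (fam \<omega>) \<partial>M) = (\<integral>\<^sup>+\<omega>. \<integral>\<^sup>+\<omega>'. F (mixk k (fam \<omega>) (fam \<omega>')) \<partial>M \<partial>M)"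
proof -
  let ?P = "Past (k - 1)" and ?B = "Blk k"
  let ?MP = "PiM ?P (\<lambda>_. count_space UNIV)" and ?MB = "PiM ?B (\<lambda>_. count_space UNIV)"
  define PW where "PW \<omega> = restrict (\<lambda>i. X i \<omega>) ?P" for \<omega>
  define BV where "BV \<omega> = restrict (\<lambda>i. X i \<omega>) ?B" for \<omega>
  define mg where "mg = (\<lambda>(w, v). restrict (\<lambda>i. if i \<in> ?P then w i else if i \<in> ?B then v i else (0::nat)) inar_index_set)"
  define h where "h = (\<lambda>z. F (mg z))"
  have ind: "indep_var ?MP PW ?MB BV"
    unfolding PW_def BV_def
    by (rule indep_var_restrict[OF indep Past_Blk_disj[OF k] Past_sub Blk_sub[OF k]])
  have rvP: "PW \<in> measurable M ?MP" and rvB: "BV \<in> measurable M ?MB"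
    using ind by (auto dest: indep_var_rv1 indep_var_rv2)
  have mgm: "mg \<in> measurable (?MP \<Otimes>\<^sub>M ?MB) Om"
  proof -
    have "mg = (\<lambda>x. restrict (\<lambda>i. case x of (w, v) \<Rightarrow> if i \<in> ?P then w i else if i \<in> ?B then v i else 0) inar_index_set)"
      unfolding mg_def by (auto simp: fun_eq_iff split: prod.split)
    then show ?thesis using mixk_meas[OF k] by simp
  qed
  have hm: "h \<in> borel_measurable (?MP \<Otimes>\<^sub>M ?MB)"
    unfolding h_def using measurable_compose[OF mgm Fm] by (simp add: comp_def)
  have eq1: "F (fam \<omega>) = h (PW \<omega>, BV \<omega>)" for \<omega>
    unfolding h_def mg_def PW_def BV_def
    by (rule dep) (use Past_sub Blk_sub[OF k] Past_Blk[OF k] in \<open>auto simp: fam_def\<close>)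
  have eq2: "F (mixk k (fam \<omega>) (fam \<omega>')) = h (PW \<omega>, BV \<omega>')" for \<omega> \<omega>'
    unfolding h_def mg_def PW_def BV_def mixk_def
    by (rule dep) (use Past_sub Blk_sub[OF k] Past_Blk[OF k] in \<open>auto simp: fam_def\<close>)
  interpret P: prob_space "distr M ?MP PW" by (rule prob_space_distr[OF rvP])
  interpret B: prob_space "distr M ?MB BV" by (rule prob_space_distr[OF rvB])
  interpret PB: pair_prob_space "distr M ?MP PW" "distr M ?MB BV" ..
  have joint: "distr M ?MP PW \<Otimes>\<^sub>M distr M ?MB BV = distr M (?MP \<Otimes>\<^sub>M ?MB) (\<lambda>x. (PW x, BV x))"
    using ind by (simp add: indep_var_distribution_eq)
  have "(\<integral>\<^sup>+\<omega>. F (fam \<omega>) \<partial>M) = (\<integral>\<^sup>+\<omega>. h (PW \<omega>, BV \<omega>) \<partial>M)"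
    by (simp add: eq1)
  also have "\<dots> = (\<integral>\<^sup>+z. h z \<partial>distr M (?MP \<Otimes>\<^sub>M ?MB) (\<lambda>x. (PW x, BV x)))"
    by (rule nn_integral_distr[symmetric]) (use rvP rvB hm in \<open>auto intro: measurable_Pair\<close>)
  also have "\<dots> = (\<integral>\<^sup>+z. h z \<partial>(distr M ?MP PW \<Otimes>\<^sub>M distr M ?MB BV))"
    by (simp only: joint)
  also have "\<dots> = (\<integral>\<^sup>+w. \<integral>\<^sup>+v. h (w, v) \<partial>distr M ?MB BV \<partial>distr M ?MP PW)"
    by (rule B.nn_integral_fst[symmetric]) (use hm in simp)
  also have "\<dots> = (\<integral>\<^sup>+\<omega>. \<integral>\<^sup>+v. h (PW \<omega>, v) \<partial>distr M ?MB BV \<partial>M)"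
    by (rule nn_integral_distr[OF rvP]) (use hm in \<open>auto intro: B.borel_measurable_nn_integral_fst\<close>)
  also have "\<dots> = (\<integral>\<^sup>+\<omega>. \<integral>\<^sup>+\<omega>'. h (PW \<omega>, BV \<omega>') \<partial>M \<partial>M)"
    by (intro nn_integral_cong nn_integral_distr[OF rvB]) (use hm rvP in \<open>auto\<close>)
  also have "\<dots> = (\<integral>\<^sup>+\<omega>. \<integral>\<^sup>+\<omega>'. F (mixk k (fam \<omega>) (fam \<omega>')) \<partial>M \<partial>M)"
    by (simp add: eq2)
  finally show ?thesis .
qed

lemma core_int:
  fixes F :: "(inar_idx \<Rightarrow> nat) \<Rightarrow> real"
  assumes k: "k \<ge> 1" and Fm: "F \<in> borel_measurable Om"
    and dep: "\<And>f g. (\<And>i. i \<in> Past k \<Longrightarrow> f i = g i) \<Longrightarrow> F f = F g"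
    and Fi: "integrable M (\<lambda>\<omega>. F (fam \<omega>))"
  shows "(\<integral>\<omega>. F (fam \<omega>) \<partial>M) = (\<integral>\<omega>. \<integral>\<omega>'. F (mixk k (fam \<omega>) (fam \<omega>')) \<partial>M \<partial>M)"
proof -
  let ?P = "Past (k - 1)" and ?B = "Blk k"
  let ?MP = "PiM ?P (\<lambda>_. count_space UNIV)" and ?MB = "PiM ?B (\<lambda>_. count_space UNIV)"
  define PW where "PW \<omega> = restrict (\<lambda>i. X i \<omega>) ?P" for \<omega>
  define BV where "BV \<omega> = restrict (\<lambda>i. X i \<omega>) ?B" for \<omega>
  define mg where "mg = (\<lambda>(w, v). restrict (\<lambda>i. if i \<in> ?P then w i else if i \<in> ?B then v i else (0::nat)) inar_index_set)"
  define h where "h = (\<lambda>z. F (mg z))"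
  have ind: "indep_var ?MP PW ?MB BV"
    unfolding PW_def BV_def
    by (rule indep_var_restrict[OF indep Past_Blk_disj[OF k] Past_sub Blk_sub[OF k]])
  have rvP: "PW \<in> measurable M ?MP" and rvB: "BV \<in> measurable M ?MB"
    using ind by (auto dest: indep_var_rv1 indep_var_rv2)
  have mgm: "mg \<in> measurable (?MP \<Otimes>\<^sub>M ?MB) Om"
  proof -
    have "mg = (\<lambda>x. restrict (\<lambda>i. case x of (w, v) \<Rightarrow> if i \<in> ?P then w i else if i \<in> ?B then v i else 0) inar_index_set)"
      unfolding mg_def by (auto simp: fun_eq_iff split: prod.split)
    then show ?thesis using mixk_meas[OF k] by simp
  qed
  have hm: "h \<in> borel_measurable (?MP \<Otimes>\<^sub>M ?MB)"
    unfolding h_def using measurable_compose[OF mgm Fm] by (simp add: comp_def)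
  have eq1: "F (fam \<omega>) = h (PW \<omega>, BV \<omega>)" for \<omega>
    unfolding h_def mg_def PW_def BV_def
    by (rule dep) (use Past_sub Blk_sub[OF k] Past_Blk[OF k] in \<open>auto simp: fam_def\<close>)
  have eq2: "F (mixk k (fam \<omega>) (fam \<omega>')) = h (PW \<omega>, BV \<omega>')" for \<omega> \<omega>'
    unfolding h_def mg_def PW_def BV_def mixk_def
    by (rule dep) (use Past_sub Blk_sub[OF k] Past_Blk[OF k] in \<open>auto simp: fam_def\<close>)
  interpret P: prob_space "distr M ?MP PW" by (rule prob_space_distr[OF rvP])
  interpret B: prob_space "distr M ?MB BV" by (rule prob_space_distr[OF rvB])
  interpret PB: pair_prob_space "distr M ?MP PW" "distr M ?MB BV" ..
  have joint: "distr M ?MP PW \<Otimes>\<^sub>M distr M ?MB BV = distr M (?MP \<Otimes>\<^sub>M ?MB) (\<lambda>x. (PW x, BV x))"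
    using ind by (simp add: indep_var_distribution_eq)
  have hi: "integrable (distr M ?MP PW \<Otimes>\<^sub>M distr M ?MB BV) h"
  proof -
    have "integrable M (\<lambda>x. h (PW x, BV x))" using Fi by (simp add: eq1)
    then show ?thesis unfolding joint using hm rvP rvB
      by (subst integrable_distr_eq) (auto intro: measurable_Pair)
  qed
  have "(\<integral>\<omega>. F (fam \<omega>) \<partial>M) = (\<integral>\<omega>. h (PW \<omega>, BV \<omega>) \<partial>M)"
    by (simp add: eq1)
  also have "\<dots> = (\<integral>z. h z \<partial>distr M (?MP \<Otimes>\<^sub>M ?MB) (\<lambda>x. (PW x, BV x)))"
    by (rule integral_distr[symmetric]) (use rvP rvB hm in \<open>auto intro: measurable_Pair\<close>)
  also have "\<dots> = (\<integral>z. h z \<partial>(distr M ?MP PW \<Otimes>\<^sub>M distr M ?MB BV))"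
    by (simp only: joint)
  also have "\<dots> = (\<integral>w. \<integral>v. h (w, v) \<partial>distr M ?MB BV \<partial>distr M ?MP PW)"
    by (rule PB.integral_fst'[symmetric]) (rule hi)
  also have "\<dots> = (\<integral>\<omega>. \<integral>v. h (PW \<omega>, v) \<partial>distr M ?MB BV \<partial>M)"
    by (rule integral_distr[OF rvP]) (use hm in \<open>auto intro: B.borel_measurable_lebesgue_integral\<close>)
  also have "\<dots> = (\<integral>\<omega>. \<integral>\<omega>'. h (PW \<omega>, BV \<omega>') \<partial>M \<partial>M)"
  proof (rule Bochner_Integration.integral_cong[OF refl])
    fix \<omega> assume "\<omega> \<in> space M"
    then have "PW \<omega> \<in> space ?MP" using measurable_space[OF rvP] by blast
    then have "(\<lambda>v. h (PW \<omega>, v)) \<in> borel_measurable ?MB"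
      using hm by (rule measurable_compose_Pair1)
    then show "(\<integral>v. h (PW \<omega>, v) \<partial>distr M ?MB BV) = (\<integral>\<omega>'. h (PW \<omega>, BV \<omega>') \<partial>M)"
      by (rule integral_distr[OF rvB])
  qed
  also have "\<dots> = (\<integral>\<omega>. \<integral>\<omega>'. F (mixk k (fam \<omega>) (fam \<omega>')) \<partial>M \<partial>M)"
    by (simp add: eq2)
  finally show ?thesis .
qed

end

context inar begin

lemma alpha_pos: "0 < \<alpha>" and alpha_lt1: "\<alpha> < 1" using alpha by auto

lemma xi_meas[measurable]: "k \<ge> 1 \<Longrightarrow> j \<ge> 1 \<Longrightarrow> xi k j \<in> measurable M (count_space UNIV)"
  using X_meas[of "IXi k j"] by (simp add: inar_index_set_def)

lemma eps_meas[measurable]: "k \<ge> 1 \<Longrightarrow> eps k \<in> measurable M (count_space UNIV)"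
  using X_meas[of "IEps k"] by (simp add: inar_index_set_def)

lemma Y0_meas[measurable]: "Y0 \<in> measurable M (count_space UNIV)"
  using X_meas[of "IY0"] by (simp add: inar_index_set_def)

lemma xi_integral:
  fixes g :: "nat \<Rightarrow> real"
  assumes "k \<ge> 1" "j \<ge> 1"
  shows "integrable M (\<lambda>\<omega>. g (xi k j \<omega>))" and "(\<integral>\<omega>. g (xi k j \<omega>) \<partial>M) = \<alpha> * g 1 + (1 - \<alpha>) * g 0"
proof -
  have m: "xi k j \<in> measurable M (count_space UNIV)" using assms by simp
  have d: "distr M (count_space UNIV) (xi k j) = measure_pmf (map_pmf (\<lambda>b. if b then 1 else 0) (bernoulli_pmf \<alpha>))"
    using xi_bern assms by blast
  have "integrable (distr M (count_space UNIV) (xi k j)) g"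
    unfolding d by (rule integrable_measure_pmf_finite) simp
  then show "integrable M (\<lambda>\<omega>. g (xi k j \<omega>))"
    using integrable_distr_eq[OF m, of g] by simp
  have "(\<integral>\<omega>. g (xi k j \<omega>) \<partial>M) = (\<integral>x. g x \<partial>distr M (count_space UNIV) (xi k j))"
    using integral_distr[OF m, of g] by simp
  also have "\<dots> = \<alpha> * g 1 + (1 - \<alpha>) * g 0"
    unfolding d using alpha by simp
  finally show "(\<integral>\<omega>. g (xi k j \<omega>) \<partial>M) = \<alpha> * g 1 + (1 - \<alpha>) * g 0" .
qed

lemma eps_integral:
  fixes g :: "nat \<Rightarrow> real"
  assumes "k \<ge> 1"
  shows "integrable M (\<lambda>\<omega>. g (eps k \<omega>)) \<longleftrightarrow> integrable M (\<lambda>\<omega>. g (eps 1 \<omega>))"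
    and "(\<integral>\<omega>. g (eps k \<omega>) \<partial>M) = (\<integral>\<omega>. g (eps 1 \<omega>) \<partial>M)"
proof -
  have m: "eps k \<in> measurable M (count_space UNIV)" and m1: "eps 1 \<in> measurable M (count_space UNIV)"
    using assms by simp_all
  have d: "distr M (count_space UNIV) (eps k) = distr M (count_space UNIV) (eps 1)"
    using eps_ident assms by blast
  show "integrable M (\<lambda>\<omega>. g (eps k \<omega>)) \<longleftrightarrow> integrable M (\<lambda>\<omega>. g (eps 1 \<omega>))"
    using integrable_distr_eq[OF m, of g] integrable_distr_eq[OF m1, of g] d by simp
  show "(\<integral>\<omega>. g (eps k \<omega>) \<partial>M) = (\<integral>\<omega>. g (eps 1 \<omega>) \<partial>M)"
    using integral_distr[OF m, of g] integral_distr[OF m1, of g] d by simp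
qed

lemma eps1_int: "integrable M (\<lambda>\<omega>. real (eps 1 \<omega>))"
  by (rule square_integrable_imp_integrable[OF _ eps_sq]) simp

lemma eps_int: "k \<ge> 1 \<Longrightarrow> integrable M (\<lambda>\<omega>. real (eps k \<omega>))"
  using eps_integral(1)[of k real] eps1_int by simp

lemma eps_sq_int: "k \<ge> 1 \<Longrightarrow> integrable M (\<lambda>\<omega>. (real (eps k \<omega>))\<^sup>2)"
  using eps_integral(1)[of k "\<lambda>x. (real x)\<^sup>2"] eps_sq by simp

lemma eps_mean: "k \<ge> 1 \<Longrightarrow> (\<integral>\<omega>. real (eps k \<omega>) \<partial>M) = \<mu>"
  using eps_integral(2)[of k real] mu_def by simp

definition m2 where "m2 = (\<integral>\<omega>. (real (eps 1 \<omega>))\<^sup>2 \<partial>M)"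

lemma eps_m2: "k \<ge> 1 \<Longrightarrow> (\<integral>\<omega>. (real (eps k \<omega>))\<^sup>2 \<partial>M) = m2"
  using eps_integral(2)[of k "\<lambda>x. (real x)\<^sup>2"] m2_def by simp

lemma indep_pair:
  fixes g h :: "nat \<Rightarrow> real"
  assumes "a \<in> inar_index_set" "b \<in> inar_index_set" "a \<noteq> b"
    and "integrable M (\<lambda>\<omega>. g (X a \<omega>))" "integrable M (\<lambda>\<omega>. h (X b \<omega>))"
  shows "(\<integral>\<omega>. g (X a \<omega>) * h (X b \<omega>) \<partial>M) = (\<integral>\<omega>. g (X a \<omega>) \<partial>M) * (\<integral>\<omega>. h (X b \<omega>) \<partial>M)"
proof -
  have iv: "indep_var (PiM {a} (\<lambda>_. count_space UNIV)) (\<lambda>\<omega>. restrict (\<lambda>i. X i \<omega>) {a})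
                      (PiM {b} (\<lambda>_. count_space UNIV)) (\<lambda>\<omega>. restrict (\<lambda>i. X i \<omega>) {b})"
    by (rule indep_var_restrict[OF indep]) (use assms in auto)
  have ga: "(\<lambda>f. g (f a)) \<in> borel_measurable (PiM {a} (\<lambda>_. count_space UNIV))"
  proof -
    have "(\<lambda>f. f a) \<in> measurable (PiM {a} (\<lambda>_. count_space UNIV)) (count_space UNIV)"
      by (rule measurable_component_singleton) simp
    then show ?thesis using measurable_compose[of _ _ "count_space UNIV" g borel] by auto
  qed
  have hb: "(\<lambda>f. h (f b)) \<in> borel_measurable (PiM {b} (\<lambda>_. count_space UNIV))"
  proof -
    have "(\<lambda>f. f b) \<in> measurable (PiM {b} (\<lambda>_. count_space UNIV)) (count_space UNIV)"
      by (rule measurable_component_singleton) simp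
    then show ?thesis using measurable_compose[of _ _ "count_space UNIV" h borel] by auto
  qed
  have "indep_var borel ((\<lambda>f. g (f a)) \<circ> (\<lambda>\<omega>. restrict (\<lambda>i. X i \<omega>) {a}))
                  borel ((\<lambda>f. h (f b)) \<circ> (\<lambda>\<omega>. restrict (\<lambda>i. X i \<omega>) {b}))"
    by (rule indep_var_compose[OF iv ga hb])
  then have "indep_var borel (\<lambda>\<omega>. g (X a \<omega>)) borel (\<lambda>\<omega>. h (X b \<omega>))"
    by (simp add: comp_def)
  from indep_var_lebesgue_integral[OF this assms(4,5)] show ?thesis .
qed

end

lemma (in prob_space) L2_prod_int:
  fixes f g :: "'a \<Rightarrow> real"
  assumes [measurable]: "f \<in> borel_measurable M" "g \<in> borel_measurable M"
    and "integrable M (\<lambda>\<omega>. (f \<omega>)\<^sup>2)" "integrable M (\<lambda>\<omega>. (g \<omega>)\<^sup>2)"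
  shows "integrable M (\<lambda>\<omega>. f \<omega> * g \<omega>)"
proof (rule Bochner_Integration.integrable_bound[of _ "\<lambda>\<omega>. (f \<omega>)\<^sup>2 + (g \<omega>)\<^sup>2"])
  show "integrable M (\<lambda>\<omega>. (f \<omega>)\<^sup>2 + (g \<omega>)\<^sup>2)" using assms by simp
  show "AE x in M. norm (f x * g x) \<le> norm ((f x)\<^sup>2 + (g x)\<^sup>2)"
  proof
    fix x
    have "0 \<le> (\<bar>f x\<bar> - \<bar>g x\<bar>)\<^sup>2" by simp
    then have "2 * \<bar>f x * g x\<bar> \<le> (f x)\<^sup>2 + (g x)\<^sup>2"
      by (simp add: power2_eq_square abs_mult algebra_simps)
    then show "norm (f x * g x) \<le> norm ((f x)\<^sup>2 + (g x)\<^sup>2)" by simp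
  qed
qed simp

lemma (in prob_space) sum_orth_sq:
  fixes Z :: "'i \<Rightarrow> 'a \<Rightarrow> real"
  assumes A: "finite A"
    and meas[measurable]: "\<And>a. a \<in> A \<Longrightarrow> Z a \<in> borel_measurable M"
    and sq: "\<And>a. a \<in> A \<Longrightarrow> integrable M (\<lambda>\<omega>. (Z a \<omega>)\<^sup>2)"
    and orth: "\<And>a b. a \<in> A \<Longrightarrow> b \<in> A \<Longrightarrow> a \<noteq> b \<Longrightarrow> (\<integral>\<omega>. Z a \<omega> * Z b \<omega> \<partial>M) = 0"
  shows "integrable M (\<lambda>\<omega>. (\<Sum>a\<in>A. Z a \<omega>)\<^sup>2)"
    and "(\<integral>\<omega>. (\<Sum>a\<in>A. Z a \<omega>)\<^sup>2 \<partial>M) = (\<Sum>a\<in>A. \<integral>\<omega>. (Z a \<omega>)\<^sup>2 \<partial>M)"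
proof -
  have eq: "(\<Sum>a\<in>A. Z a \<omega>)\<^sup>2 = (\<Sum>a\<in>A. \<Sum>b\<in>A. Z a \<omega> * Z b \<omega>)" for \<omega>
    by (simp add: power2_eq_square sum_product)
  have pi: "integrable M (\<lambda>\<omega>. Z a \<omega> * Z b \<omega>)" if "a \<in> A" "b \<in> A" for a b
    using that by (intro L2_prod_int meas sq)
  show "integrable M (\<lambda>\<omega>. (\<Sum>a\<in>A. Z a \<omega>)\<^sup>2)"
    unfolding eq by (intro Bochner_Integration.integrable_sum pi)
  have "(\<integral>\<omega>. (\<Sum>a\<in>A. Z a \<omega>)\<^sup>2 \<partial>M) = (\<Sum>a\<in>A. \<Sum>b\<in>A. \<integral>\<omega>. Z a \<omega> * Z b \<omega> \<partial>M)"
    unfolding eq by (simp add: pi integrable_sum)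
  also have "\<dots> = (\<Sum>a\<in>A. \<integral>\<omega>. Z a \<omega> * Z a \<omega> \<partial>M)"
  proof (rule sum.cong[OF refl])
    fix a assume a: "a \<in> A"
    have "(\<Sum>b\<in>A. \<integral>\<omega>. Z a \<omega> * Z b \<omega> \<partial>M) = (\<Sum>b\<in>{a}. \<integral>\<omega>. Z a \<omega> * Z b \<omega> \<partial>M)"
      by (rule sum.mono_neutral_right) (use A a orth in auto)
    then show "(\<Sum>b\<in>A. \<integral>\<omega>. Z a \<omega> * Z b \<omega> \<partial>M) = (\<integral>\<omega>. Z a \<omega> * Z a \<omega> \<partial>M)" by simp
  qed
  finally show "(\<integral>\<omega>. (\<Sum>a\<in>A. Z a \<omega>)\<^sup>2 \<partial>M) = (\<Sum>a\<in>A. \<integral>\<omega>. (Z a \<omega>)\<^sup>2 \<partial>M)"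
    by (simp add: power2_eq_square)
qed

context inar begin

definition sig2 where "sig2 = m2 - \<mu>\<^sup>2"

definition Zt :: "nat \<Rightarrow> nat \<Rightarrow> 'a \<Rightarrow> real" where
  "Zt k a \<omega> = (if a = 0 then real (eps k \<omega>) - \<mu> else real (xi k a \<omega>) - \<alpha>)"

definition Wt :: "nat \<Rightarrow> nat \<Rightarrow> 'a \<Rightarrow> real" where
  "Wt k y \<omega> = (\<Sum>l\<in>{1..y}. real (xi k l \<omega>)) - \<alpha> * real y + real (eps k \<omega>) - \<mu>"

lemma Wt_Zt: "Wt k y \<omega> = (\<Sum>a\<in>{0..y}. Zt k a \<omega>)"
proof -
  have "(\<Sum>a\<in>{0..y}. Zt k a \<omega>) = Zt k 0 \<omega> + (\<Sum>a\<in>{1..y}. Zt k a \<omega>)"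
    by (simp add: sum.atLeast_Suc_atMost)
  also have "(\<Sum>a\<in>{1..y}. Zt k a \<omega>) = (\<Sum>a\<in>{1..y}. real (xi k a \<omega>) - \<alpha>)"
    by (rule sum.cong) (auto simp: Zt_def)
  finally show ?thesis by (simp add: Wt_def Zt_def sum_subtractf)
qed

lemma Zt_meas[measurable]: "k \<ge> 1 \<Longrightarrow> Zt k a \<in> borel_measurable M"
  unfolding Zt_def by (cases "a = 0") simp_all

lemma Zt_is_X: "k \<ge> 1 \<Longrightarrow> Zt k a \<omega> = (\<lambda>x. real x - (if a = 0 then \<mu> else \<alpha>)) (X (if a = 0 then IEps k else IXi k a) \<omega>)"
  unfolding Zt_def by simp

lemma Zt_int: "k \<ge> 1 \<Longrightarrow> integrable M (\<lambda>\<omega>. Zt k a \<omega>)"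
  unfolding Zt_def using eps_int[of k] xi_integral(1)[of k a "\<lambda>x. real x - \<alpha>"] by (cases "a = 0") auto

lemma Zt_mean: "k \<ge> 1 \<Longrightarrow> (\<integral>\<omega>. Zt k a \<omega> \<partial>M) = 0"
  unfolding Zt_def using eps_int[of k] eps_mean[of k] xi_integral(2)[of k a "\<lambda>x. real x - \<alpha>"]
  by (cases "a = 0") (auto simp: prob_space)

lemma Zt_sq_int: "k \<ge> 1 \<Longrightarrow> integrable M (\<lambda>\<omega>. (Zt k a \<omega>)\<^sup>2)"
proof (cases "a = 0")
  case True
  assume k: "k \<ge> 1"
  have "(\<lambda>\<omega>. (Zt k a \<omega>)\<^sup>2) = (\<lambda>\<omega>. (real (eps k \<omega>))\<^sup>2 - 2 * \<mu> * real (eps k \<omega>) + \<mu>\<^sup>2)"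
    using True by (auto simp: Zt_def power2_eq_square algebra_simps)
  then show ?thesis using eps_int[OF k] eps_sq_int[OF k] by simp
next
  case False
  assume k: "k \<ge> 1"
  then show ?thesis using False xi_integral(1)[of k a "\<lambda>x. (real x - \<alpha>)\<^sup>2"] by (simp add: Zt_def)
qed

lemma Zt_sq: "k \<ge> 1 \<Longrightarrow> (\<integral>\<omega>. (Zt k a \<omega>)\<^sup>2 \<partial>M) = (if a = 0 then sig2 else \<alpha> * (1 - \<alpha>))"
proof (cases "a = 0")
  case True
  assume k: "k \<ge> 1"
  have "(\<lambda>\<omega>. (Zt k a \<omega>)\<^sup>2) = (\<lambda>\<omega>. (real (eps k \<omega>))\<^sup>2 - 2 * \<mu> * real (eps k \<omega>) + \<mu>\<^sup>2)"
    using True by (auto simp: Zt_def power2_eq_square algebra_simps)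
  then show ?thesis using eps_int[OF k] eps_sq_int[OF k] eps_mean[OF k] eps_m2[OF k] True
    by (simp add: sig2_def power2_eq_square prob_space)
next
  case False
  assume k: "k \<ge> 1"
  then show ?thesis using False xi_integral(2)[of k a "\<lambda>x. (real x - \<alpha>)\<^sup>2"]
    by (simp add: Zt_def power2_eq_square algebra_simps)
qed

lemma Zt_orth:
  assumes k: "k \<ge> 1" and ab: "a \<noteq> b"
  shows "(\<integral>\<omega>. Zt k a \<omega> * Zt k b \<omega> \<partial>M) = 0"
proof -
  let ?ia = "if a = 0 then IEps k else IXi k a" and ?ib = "if b = 0 then IEps k else IXi k b"
  let ?ga = "\<lambda>x. real x - (if a = 0 then \<mu> else \<alpha>)" and ?gb = "\<lambda>x. real x - (if b = 0 then \<mu> else \<alpha>)"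
  have i: "?ia \<in> inar_index_set" "?ib \<in> inar_index_set" "?ia \<noteq> ?ib"
    using k ab by (auto simp: inar_index_set_def)
  have "(\<integral>\<omega>. Zt k a \<omega> * Zt k b \<omega> \<partial>M) = (\<integral>\<omega>. ?ga (X ?ia \<omega>) * ?gb (X ?ib \<omega>) \<partial>M)"
    using Zt_is_X[OF k, of a] Zt_is_X[OF k, of b] by simp
  also have "\<dots> = (\<integral>\<omega>. ?ga (X ?ia \<omega>) \<partial>M) * (\<integral>\<omega>. ?gb (X ?ib \<omega>) \<partial>M)"
    by (rule indep_pair[OF i]) (use Zt_int[OF k, of a] Zt_int[OF k, of b] Zt_is_X[OF k] in simp_all)
  also have "\<dots> = 0"
    using Zt_mean[OF k, of a] Zt_is_X[OF k, of a] by simp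
  finally show ?thesis .
qed

lemma Wt_meas[measurable]: "k \<ge> 1 \<Longrightarrow> Wt k y \<in> borel_measurable M"
  unfolding Wt_Zt by simp

lemma Wt_int: "k \<ge> 1 \<Longrightarrow> integrable M (Wt k y)"
  unfolding Wt_Zt by (intro Bochner_Integration.integrable_sum Zt_int)

lemma Wt_mean: "k \<ge> 1 \<Longrightarrow> (\<integral>\<omega>. Wt k y \<omega> \<partial>M) = 0"
  unfolding Wt_Zt using Zt_int Zt_mean by (simp add: integral_sum)

lemma Wt_sq:
  assumes k: "k \<ge> 1"
  shows "integrable M (\<lambda>\<omega>. (Wt k y \<omega>)\<^sup>2)" and "(\<integral>\<omega>. (Wt k y \<omega>)\<^sup>2 \<partial>M) = sig2 + real y * (\<alpha> * (1 - \<alpha>))"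
proof -
  note s = sum_orth_sq[of "{0..y}" "Zt k", OF _ Zt_meas[OF k] Zt_sq_int[OF k] Zt_orth[OF k]]
  show "integrable M (\<lambda>\<omega>. (Wt k y \<omega>)\<^sup>2)" unfolding Wt_Zt using s(1) by simp
  have "(\<integral>\<omega>. (Wt k y \<omega>)\<^sup>2 \<partial>M) = (\<Sum>a\<in>{0..y}. if a = 0 then sig2 else \<alpha> * (1 - \<alpha>))"
    unfolding Wt_Zt using s(2) Zt_sq[OF k] by simp
  also have "\<dots> = sig2 + (\<Sum>a\<in>{1..y}. \<alpha> * (1 - \<alpha>))"
    by (simp add: sum.atLeast_Suc_atMost)
  finally show "(\<integral>\<omega>. (Wt k y \<omega>)\<^sup>2 \<partial>M) = sig2 + real y * (\<alpha> * (1 - \<alpha>))" by simp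
qed

lemma sig2_nonneg: "sig2 \<ge> 0"
  using Wt_sq(2)[of 1 0] integral_nonneg_AE[of "\<lambda>\<omega>. (Wt 1 0 \<omega>)\<^sup>2" M] by simp

end

lemma telescope_diff:
  fixes S :: "nat \<Rightarrow> real"
  shows "k \<le> n \<Longrightarrow> S n - S k = (\<Sum>j\<in>{Suc k..n}. S j - S (j - 1))"
proof (induction n)
  case 0 then show ?case by simp
next
  case (Suc n)
  show ?case
  proof (cases "k \<le> n")
    case True
    then show ?thesis using Suc.IH by (simp add: sum.cl_ivl_Suc)
  next
    case False
    then have "k = Suc n" using Suc.prems by simp
    then show ?thesis by simp
  qed
qed

lemma (in prob_space) kolmogorov:
  fixes S :: "nat \<Rightarrow> 'a \<Rightarrow> real" and n :: nat and lam :: real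
  assumes lam: "lam > 0" and S0: "\<And>\<omega>. S 0 \<omega> = 0"
    and Sm[measurable]: "\<And>k. S k \<in> borel_measurable M"
    and Ssq: "\<And>k. k \<le> n \<Longrightarrow> integrable M (\<lambda>\<omega>. (S k \<omega>)\<^sup>2)"
    and orth: "\<And>k j. k < j \<Longrightarrow> j \<le> n \<Longrightarrow>
       (\<integral>\<omega>. (S j \<omega> - S (j - 1) \<omega>) * (S k \<omega> * indicator {\<omega>\<in>space M. lam \<le> \<bar>S k \<omega>\<bar> \<and> (\<forall>i<k. \<bar>S i \<omega>\<bar> < lam)} \<omega>) \<partial>M) = 0"
  shows "prob {\<omega>\<in>space M. \<exists>k\<le>n. lam \<le> \<bar>S k \<omega>\<bar>} \<le> (\<integral>\<omega>. (S n \<omega>)\<^sup>2 \<partial>M) / lam\<^sup>2"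
proof -
  define A where "A k = {\<omega>\<in>space M. lam \<le> \<bar>S k \<omega>\<bar> \<and> (\<forall>i<k. \<bar>S i \<omega>\<bar> < lam)}" for k
  have Am[measurable]: "A k \<in> sets M" for k unfolding A_def by measurable
  have disj: "disjoint_family_on A {..n}"
    unfolding disjoint_family_on_def A_def
    by (auto, metis linorder_neqE_nat not_less)
  have U: "{\<omega>\<in>space M. \<exists>k\<le>n. lam \<le> \<bar>S k \<omega>\<bar>} = (\<Union>k\<in>{..n}. A k)"
  proof safe
    fix \<omega> k assume \<omega>: "\<omega> \<in> space M" and k: "k \<le> n" "lam \<le> \<bar>S k \<omega>\<bar>"
    define k0 where "k0 = (LEAST i. lam \<le> \<bar>S i \<omega>\<bar>)"
    have "lam \<le> \<bar>S k0 \<omega>\<bar>" unfolding k0_def by (rule LeastI[of _ k]) (use k in auto)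
    moreover have "k0 \<le> k" unfolding k0_def by (rule Least_le) (use k in auto)
    moreover have "\<forall>i<k0. \<bar>S i \<omega>\<bar> < lam" unfolding k0_def using not_less_Least by force
    ultimately show "\<omega> \<in> (\<Union>k\<in>{..n}. A k)" using \<omega> k unfolding A_def by auto
  qed (auto simp: A_def)
  have SA_sq: "integrable M (\<lambda>\<omega>. (S k \<omega> * indicator (A k) \<omega>)\<^sup>2)" if "k \<le> n" for k
  proof (rule Bochner_Integration.integrable_bound[OF Ssq[OF that]])
    show "AE x in M. norm ((S k x * indicator (A k) x)\<^sup>2) \<le> norm ((S k x)\<^sup>2)"
      by (auto simp: indicator_def)
  qed simp
  have dsq: "integrable M (\<lambda>\<omega>. (S j \<omega> - S i \<omega>)\<^sup>2)" if "j \<le> n" "i \<le> n" for i j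
  proof -
    have "(\<lambda>\<omega>. (S j \<omega> - S i \<omega>)\<^sup>2) = (\<lambda>\<omega>. (S j \<omega>)\<^sup>2 + (S i \<omega>)\<^sup>2 - 2 * (S j \<omega> * S i \<omega>))"
      by (auto simp: power2_eq_square algebra_simps)
    then show ?thesis using Ssq that L2_prod_int[OF Sm Sm Ssq Ssq] by simp
  qed
  have key: "lam\<^sup>2 * prob (A k) \<le> (\<integral>\<omega>. (S n \<omega>)\<^sup>2 * indicator (A k) \<omega> \<partial>M)" if k: "k \<le> n" for k
  proof -
    have i1: "integrable M (\<lambda>\<omega>. (S k \<omega>)\<^sup>2 * indicator (A k) \<omega>)"
      using Ssq[OF k] by (rule Bochner_Integration.integrable_bound) (auto simp: indicator_def)
    have "lam\<^sup>2 * prob (A k) = (\<integral>\<omega>. lam\<^sup>2 * indicator (A k) \<omega> \<partial>M)"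
      using Am by (simp add: Int_absorb2 sets.sets_into_space)
    also have "\<dots> \<le> (\<integral>\<omega>. (S k \<omega>)\<^sup>2 * indicator (A k) \<omega> \<partial>M)"
    proof (rule integral_mono[OF _ i1])
      show "integrable M (\<lambda>\<omega>. lam\<^sup>2 * indicator (A k) \<omega>)"
        using Am by (intro integrable_mult_right integrable_real_indicator) (auto simp: less_top[symmetric])
      fix \<omega> show "lam\<^sup>2 * indicator (A k) \<omega> \<le> (S k \<omega>)\<^sup>2 * indicator (A k) \<omega>"
        using lam by (auto simp: indicator_def A_def abs_le_square_iff[symmetric])
    qed
    also have "\<dots> \<le> (\<integral>\<omega>. (S n \<omega>)\<^sup>2 * indicator (A k) \<omega> \<partial>M)"
    proof -
      define R where "R \<omega> = S n \<omega> - S k \<omega>" for \<omega>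
      define H where "H \<omega> = S k \<omega> * indicator (A k) \<omega>" for \<omega>
      have Rm[measurable]: "R \<in> borel_measurable M" and Hm[measurable]: "H \<in> borel_measurable M"
        unfolding R_def H_def by measurable
      have iHR: "integrable M (\<lambda>\<omega>. H \<omega> * R \<omega>)"
        using SA_sq[OF k] dsq[OF order.refl k] unfolding R_def H_def
        by (intro L2_prod_int) simp_all
      have HR0: "(\<integral>\<omega>. H \<omega> * R \<omega> \<partial>M) = 0"
      proof -
        have "(\<lambda>\<omega>. H \<omega> * R \<omega>) = (\<lambda>\<omega>. \<Sum>j\<in>{Suc k..n}. (S j \<omega> - S (j - 1) \<omega>) * H \<omega>)"
        proof
          fix \<omega>
          have "S n \<omega> - S k \<omega> = (\<Sum>j\<in>{Suc k..n}. S j \<omega> - S (j - 1) \<omega>)"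
            using telescope_diff[OF k, of "\<lambda>i. S i \<omega>"] by simp
          then show "H \<omega> * R \<omega> = (\<Sum>j\<in>{Suc k..n}. (S j \<omega> - S (j - 1) \<omega>) * H \<omega>)"
            unfolding R_def by (simp add: sum_distrib_left mult.commute)
        qed
        moreover have "integrable M (\<lambda>\<omega>. (S j \<omega> - S (j - 1) \<omega>) * H \<omega>)" if "j \<in> {Suc k..n}" for j
        proof -
          have jn: "j \<le> n" "j - 1 \<le> n" using that by auto
          show ?thesis using SA_sq[OF k] dsq[OF jn] unfolding H_def by (intro L2_prod_int) simp_all
        qed
        moreover have "(\<integral>\<omega>. (S j \<omega> - S (j - 1) \<omega>) * H \<omega> \<partial>M) = 0" if "j \<in> {Suc k..n}" for j
          using orth[of k j] that unfolding H_def A_def by simp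
        ultimately show ?thesis by (simp add: integral_sum)
      qed
      have i2: "integrable M (\<lambda>\<omega>. (S n \<omega>)\<^sup>2 * indicator (A k) \<omega>)"
        using Ssq[of n] by (rule Bochner_Integration.integrable_bound) (auto simp: indicator_def)
      have "(\<integral>\<omega>. (S k \<omega>)\<^sup>2 * indicator (A k) \<omega> \<partial>M) = (\<integral>\<omega>. (S k \<omega>)\<^sup>2 * indicator (A k) \<omega> + 2 * (H \<omega> * R \<omega>) \<partial>M)"
        using i1 iHR HR0 by simp
      also have "\<dots> \<le> (\<integral>\<omega>. (S n \<omega>)\<^sup>2 * indicator (A k) \<omega> \<partial>M)"
      proof (rule integral_mono[OF _ i2])
        show "integrable M (\<lambda>\<omega>. (S k \<omega>)\<^sup>2 * indicator (A k) \<omega> + 2 * (H \<omega> * R \<omega>))"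
          using i1 iHR by simp
        fix \<omega>
        have "0 \<le> (R \<omega>)\<^sup>2 * indicator (A k) \<omega>" by simp
        then show "(S k \<omega>)\<^sup>2 * indicator (A k) \<omega> + 2 * (H \<omega> * R \<omega>) \<le> (S n \<omega>)\<^sup>2 * indicator (A k) \<omega>"
          unfolding H_def R_def by (auto simp: indicator_def power2_eq_square algebra_simps)
      qed
      finally show ?thesis .
    qed
    finally show ?thesis .
  qed
  have "lam\<^sup>2 * prob {\<omega>\<in>space M. \<exists>k\<le>n. lam \<le> \<bar>S k \<omega>\<bar>} = (\<Sum>k\<in>{..n}. lam\<^sup>2 * prob (A k))"
    unfolding U using finite_measure_finite_Union[of "{..n}" A] disj Am by (simp add: sum_distrib_left image_subset_iff)
  also have "\<dots> \<le> (\<Sum>k\<in>{..n}. \<integral>\<omega>. (S n \<omega>)\<^sup>2 * indicator (A k) \<omega> \<partial>M)"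
    by (rule sum_mono) (use key in auto)
  also have "\<dots> = (\<integral>\<omega>. (\<Sum>k\<in>{..n}. (S n \<omega>)\<^sup>2 * indicator (A k) \<omega>) \<partial>M)"
  proof (rule Bochner_Integration.integral_sum[symmetric])
    fix k show "integrable M (\<lambda>\<omega>. (S n \<omega>)\<^sup>2 * indicator (A k) \<omega>)"
      using Ssq[of n] by (rule Bochner_Integration.integrable_bound) (auto simp: indicator_def)
  qed
  also have "\<dots> \<le> (\<integral>\<omega>. (S n \<omega>)\<^sup>2 \<partial>M)"
  proof (rule integral_mono[OF _ Ssq[OF order.refl]])
    show "integrable M (\<lambda>\<omega>. \<Sum>k\<in>{..n}. (S n \<omega>)\<^sup>2 * indicator (A k) \<omega>)"
      by (intro Bochner_Integration.integrable_sum, rule Bochner_Integration.integrable_bound[OF Ssq[of n]])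
         (auto simp: indicator_def)
    fix \<omega>
    show "(\<Sum>k\<in>{..n}. (S n \<omega>)\<^sup>2 * indicator (A k) \<omega>) \<le> (S n \<omega>)\<^sup>2"
    proof (cases "\<exists>j\<in>{..n}. \<omega> \<in> A j")
      case True
      then obtain j where "j \<in> {..n}" "\<omega> \<in> A j" by blast
      then have "(\<Sum>k\<in>{..n}. (\<lambda>_. (S n \<omega>)\<^sup>2) k * indicator (A k) \<omega>) = (S n \<omega>)\<^sup>2"
        by (intro sum_indicator_disjoint_family[OF disj]) auto
      then show ?thesis by (simp only:)
    next
      case False
      then show ?thesis by (auto simp: indicator_def)
    qed
  qed
  finally show ?thesis using lam by (simp add: field_simps)
qed


lemma (in prob_space) dyadic_slln:
  fixes S :: "nat \<Rightarrow> 'a \<Rightarrow> real"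
  assumes Sm[measurable]: "\<And>k. S k \<in> borel_measurable M"
    and summ: "\<And>\<delta>. \<delta> > 0 \<Longrightarrow> summable (\<lambda>m. prob {\<omega>\<in>space M. \<exists>k\<le>2^(m+1). \<delta> * 2^m \<le> \<bar>S k \<omega>\<bar>})"
  shows "AE \<omega> in M. (\<lambda>n. S n \<omega> / real n) \<longlonglongrightarrow> 0"
proof -
  define B where "B q m = {\<omega>\<in>space M. \<exists>k\<le>2^(m+1). (1 / real (Suc q)) * 2^m \<le> \<bar>S k \<omega>\<bar>}" for q m :: nat
  have Bm[measurable]: "B q m \<in> sets M" for q m unfolding B_def by measurable
  have "AE \<omega> in M. \<forall>q. eventually (\<lambda>m. \<omega> \<in> space M - B q m) sequentially"
  proof (subst AE_all_countable, intro allI)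
    fix q
    show "AE \<omega> in M. eventually (\<lambda>m. \<omega> \<in> space M - B q m) sequentially"
      by (rule borel_cantelli_AE1) (use summ[of "1 / real (Suc q)"] in \<open>auto simp: B_def less_top[symmetric]\<close>)
  qed
  then show ?thesis
  proof (rule AE_mp, intro AE_I2 impI)
    fix \<omega> assume \<omega>: "\<omega> \<in> space M" and ev: "\<forall>q. eventually (\<lambda>m. \<omega> \<in> space M - B q m) sequentially"
    show "(\<lambda>n. S n \<omega> / real n) \<longlonglongrightarrow> 0"
    proof (rule LIMSEQ_I)
      fix r :: real assume r: "0 < r"
      obtain q where q: "1 / real (Suc q) < r"
        using reals_Archimedean[OF r] by (auto simp: field_simps)
      obtain M0 where M0: "\<And>m. m \<ge> M0 \<Longrightarrow> \<omega> \<notin> B q m"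
        using ev[rule_format, of q] unfolding eventually_sequentially by blast
      show "\<exists>no. \<forall>n\<ge>no. norm (S n \<omega> / real n - 0) < r"
      proof (intro exI[of _ "2 ^ M0"] allI impI)
        fix n :: nat assume n: "n \<ge> 2 ^ M0"
        then have n1: "n \<ge> 1" using one_le_power[of "2::nat" M0] by linarith
        obtain m where m: "2 ^ m \<le> n" "n < 2 ^ (m + 1)" using ex_power_ivl1[of 2 n] n1 by auto
        have "M0 < m + 1" using n m(2) by (metis le_less_trans power_less_imp_less_exp one_less_numeral_iff semiring_norm(76))
        then have "\<omega> \<notin> B q m" using M0 by simp
        then have "\<bar>S n \<omega>\<bar> < (1 / real (Suc q)) * 2^m" using \<omega> m(2) unfolding B_def by (auto simp: not_le dest!: spec[of _ n])
        also have "\<dots> \<le> (1 / real (Suc q)) * real n"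
          using m(1) by (intro mult_left_mono) (simp_all add: of_nat_le_iff[symmetric])
        finally have "\<bar>S n \<omega>\<bar> / real n < 1 / real (Suc q)" using n1 by (simp add: field_simps)
        then show "norm (S n \<omega> / real n - 0) < r" using q by simp
      qed
    qed
  qed
qed


context inar begin

lemma mixk_past: "i \<in> Past (j - 1) \<Longrightarrow> mixk j f g i = f i"
  unfolding mixk_def using Past_sub by auto

lemma mart_orth:
  fixes G H :: "(inar_idx \<Rightarrow> nat) \<Rightarrow> real"
  assumes j: "j \<ge> 1" and Gm[measurable]: "G \<in> borel_measurable Om" and Hm[measurable]: "H \<in> borel_measurable Om"
    and Gd: "\<And>f g. (\<And>i. i \<in> Past j \<Longrightarrow> f i = g i) \<Longrightarrow> G f = G g"
    and Hd: "\<And>f g. (\<And>i. i \<in> Past (j - 1) \<Longrightarrow> f i = g i) \<Longrightarrow> H f = H g"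
    and int: "integrable M (\<lambda>\<omega>. G (fam \<omega>) * H (fam \<omega>))"
    and zero: "\<And>\<omega>. \<omega> \<in> space M \<Longrightarrow> (\<integral>\<omega>'. G (mixk j (fam \<omega>) (fam \<omega>')) \<partial>M) = 0"
  shows "(\<integral>\<omega>. G (fam \<omega>) * H (fam \<omega>) \<partial>M) = 0"
proof -
  have "(\<integral>\<omega>. G (fam \<omega>) * H (fam \<omega>) \<partial>M) = (\<integral>\<omega>. \<integral>\<omega>'. G (mixk j (fam \<omega>) (fam \<omega>')) * H (mixk j (fam \<omega>) (fam \<omega>')) \<partial>M \<partial>M)"
  proof (rule core_int[OF j, of "\<lambda>f. G f * H f"])
    show "(\<lambda>f. G f * H f) \<in> borel_measurable Om" by measurable
    fix f g :: "inar_idx \<Rightarrow> nat" assume "\<And>i. i \<in> Past j \<Longrightarrow> f i = g i"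
    moreover have "Past (j - 1) \<subseteq> Past j" by (rule Past_mono) simp
    ultimately show "G f * H f = G g * H g" using Gd Hd by (metis subsetD)
  qed (use int in simp)
  also have "\<dots> = (\<integral>\<omega>. (\<integral>\<omega>'. G (mixk j (fam \<omega>) (fam \<omega>')) \<partial>M) * H (fam \<omega>) \<partial>M)"
  proof (rule Bochner_Integration.integral_cong[OF refl])
    fix \<omega> assume "\<omega> \<in> space M"
    have "H (mixk j (fam \<omega>) x) = H (fam \<omega>)" for x by (rule Hd) (simp add: mixk_past)
    then show "(\<integral>\<omega>'. G (mixk j (fam \<omega>) (fam \<omega>')) * H (mixk j (fam \<omega>) (fam \<omega>')) \<partial>M)
       = (\<integral>\<omega>'. G (mixk j (fam \<omega>) (fam \<omega>')) \<partial>M) * H (fam \<omega>)" by simp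
  qed
  also have "\<dots> = 0"
    by (rule integral_eq_zero_AE) (use zero in auto)
  finally show ?thesis .
qed

lemma mart_slln:
  fixes G :: "nat \<Rightarrow> (inar_idx \<Rightarrow> nat) \<Rightarrow> real"
  assumes Gm: "\<And>k. k \<ge> 1 \<Longrightarrow> G k \<in> borel_measurable Om"
    and Gd: "\<And>k f g. k \<ge> 1 \<Longrightarrow> (\<And>i. i \<in> Past k \<Longrightarrow> f i = g i) \<Longrightarrow> G k f = G k g"
    and Gz: "\<And>k \<omega>. k \<ge> 1 \<Longrightarrow> \<omega> \<in> space M \<Longrightarrow> (\<integral>\<omega>'. G k (mixk k (fam \<omega>) (fam \<omega>')) \<partial>M) = 0"
    and Gsq: "\<And>k. k \<ge> 1 \<Longrightarrow> integrable M (\<lambda>\<omega>. (G k (fam \<omega>))\<^sup>2)"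
    and summ: "summable (\<lambda>m. (\<Sum>k\<in>{1..2^(m+1)}. \<integral>\<omega>. (G k (fam \<omega>))\<^sup>2 \<partial>M) / 4^m)"
  shows "AE \<omega> in M. (\<lambda>n. (\<Sum>k\<in>{1..n}. G k (fam \<omega>)) / real n) \<longlonglongrightarrow> 0"
proof -
  define Sf where "Sf n f = (\<Sum>k\<in>{1..n}. G k f)" for n f
  have Sfm[measurable]: "Sf n \<in> borel_measurable Om" for n
    unfolding Sf_def by (intro borel_measurable_sum) (use Gm in auto)
  have Sfd: "Sf n f = Sf n g" if "\<And>i. i \<in> Past n \<Longrightarrow> f i = g i" for n f g
    unfolding Sf_def
  proof (rule sum.cong[OF refl])
    fix k assume "k \<in> {1..n}"
    then have "Past k \<subseteq> Past n" "k \<ge> 1" using Past_mono[of k n] by auto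
    then show "G k f = G k g" using Gd that by blast
  qed
  have Gfm[measurable]: "(\<lambda>\<omega>. G k (fam \<omega>)) \<in> borel_measurable M" if "k \<ge> 1" for k
    using measurable_compose[OF fam_meas Gm[OF that]] by (simp add: comp_def)
  have orth: "(\<integral>\<omega>. G b (fam \<omega>) * H (fam \<omega>) \<partial>M) = 0"
    if b: "b \<ge> 1" and Hm: "H \<in> borel_measurable Om" and Hd: "\<And>f g. (\<And>i. i \<in> Past (b - 1) \<Longrightarrow> f i = g i) \<Longrightarrow> H f = H g"
      and Hsq: "integrable M (\<lambda>\<omega>. (H (fam \<omega>))\<^sup>2)" for b H
  proof (rule mart_orth[OF b Gm[OF b] Hm Gd[OF b] Hd _ Gz[OF b]])
    have "(\<lambda>\<omega>. H (fam \<omega>)) \<in> borel_measurable M"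
      using measurable_compose[OF fam_meas Hm] by (simp add: comp_def)
    then show "integrable M (\<lambda>\<omega>. G b (fam \<omega>) * H (fam \<omega>))"
      by (intro L2_prod_int Gfm b Gsq Hsq)
  qed auto
  have S_sq: "integrable M (\<lambda>\<omega>. (Sf n (fam \<omega>))\<^sup>2) \<and>
      (\<integral>\<omega>. (Sf n (fam \<omega>))\<^sup>2 \<partial>M) = (\<Sum>k\<in>{1..n}. \<integral>\<omega>. (G k (fam \<omega>))\<^sup>2 \<partial>M)" for n
  proof -
    have o: "(\<integral>\<omega>. G a (fam \<omega>) * G b (fam \<omega>) \<partial>M) = 0" if "a \<in> {1..n}" "b \<in> {1..n}" "a \<noteq> b" for a b
    proof (cases "a < b")
      case True
      have "(\<integral>\<omega>. G b (fam \<omega>) * G a (fam \<omega>) \<partial>M) = 0"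
      proof (rule orth)
        show "b \<ge> 1" "G a \<in> borel_measurable Om" "integrable M (\<lambda>\<omega>. (G a (fam \<omega>))\<^sup>2)"
          using that Gm Gsq by auto
        fix f g :: "inar_idx \<Rightarrow> nat" assume "\<And>i. i \<in> Past (b - 1) \<Longrightarrow> f i = g i"
        moreover have "Past a \<subseteq> Past (b - 1)" using True by (intro Past_mono) simp
        ultimately show "G a f = G a g" using Gd[of a f g] that by (meson atLeastAtMost_iff subsetD)
      qed
      then show ?thesis by (simp add: mult.commute)
    next
      case False
      then have "b < a" using that by simp
      have "(\<integral>\<omega>. G a (fam \<omega>) * G b (fam \<omega>) \<partial>M) = 0"
      proof (rule orth)
        show "a \<ge> 1" "G b \<in> borel_measurable Om" "integrable M (\<lambda>\<omega>. (G b (fam \<omega>))\<^sup>2)"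
          using that Gm Gsq by auto
        fix f g :: "inar_idx \<Rightarrow> nat" assume "\<And>i. i \<in> Past (a - 1) \<Longrightarrow> f i = g i"
        moreover have "Past b \<subseteq> Past (a - 1)" using \<open>b < a\<close> by (intro Past_mono) simp
        ultimately show "G b f = G b g" using Gd[of b f g] that by (meson atLeastAtMost_iff subsetD)
      qed
      then show ?thesis .
    qed
    show ?thesis
      using sum_orth_sq[of "{1..n}" "\<lambda>k \<omega>. G k (fam \<omega>)", OF _ Gfm Gsq o] unfolding Sf_def by auto
  qed
  show ?thesis
  proof -
    have "AE \<omega> in M. (\<lambda>n. Sf n (fam \<omega>) / real n) \<longlonglongrightarrow> 0"
    proof (rule dyadic_slln)
      show "(\<lambda>\<omega>. Sf k (fam \<omega>)) \<in> borel_measurable M" for k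
        using measurable_compose[OF fam_meas Sfm] by (simp add: comp_def)
      fix \<delta> :: real assume \<delta>: "\<delta> > 0"
      have bnd: "prob {\<omega>\<in>space M. \<exists>k\<le>2^(m+1). \<delta> * 2^m \<le> \<bar>Sf k (fam \<omega>)\<bar>}
          \<le> (1 / \<delta>\<^sup>2) * ((\<Sum>k\<in>{1..2^(m+1)}. \<integral>\<omega>. (G k (fam \<omega>))\<^sup>2 \<partial>M) / 4^m)" for m
      proof -
        let ?lam = "\<delta> * 2^m" and ?N = "2^(m+1) :: nat"
        have "prob {\<omega>\<in>space M. \<exists>k\<le>?N. ?lam \<le> \<bar>Sf k (fam \<omega>)\<bar>} \<le> (\<integral>\<omega>. (Sf ?N (fam \<omega>))\<^sup>2 \<partial>M) / ?lam\<^sup>2"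
        proof (rule kolmogorov)
          show "0 < ?lam" using \<delta> by simp
          show "Sf 0 (fam \<omega>) = 0" for \<omega> by (simp add: Sf_def)
          show "(\<lambda>\<omega>. Sf k (fam \<omega>)) \<in> borel_measurable M" for k
            using measurable_compose[OF fam_meas Sfm] by (simp add: comp_def)
          show "integrable M (\<lambda>\<omega>. (Sf k (fam \<omega>))\<^sup>2)" for k using S_sq by blast
          fix k j :: nat assume kj: "k < j" "j \<le> ?N"
          define Hf where "Hf f = Sf k f * (if ?lam \<le> \<bar>Sf k f\<bar> \<and> (\<forall>i<k. \<bar>Sf i f\<bar> < ?lam) then 1 else 0)" for f
          have Hfm: "Hf \<in> borel_measurable Om" unfolding Hf_def by measurable
          have j1: "j \<ge> 1" using kj by simp
          have dj: "Sf j f - Sf (j - 1) f = G j f" for f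
            using j1 unfolding Sf_def by (cases j) (auto simp: sum.cl_ivl_Suc)
          have "(\<integral>\<omega>. G j (fam \<omega>) * Hf (fam \<omega>) \<partial>M) = 0"
          proof (rule orth[OF j1 Hfm])
            fix f g :: "inar_idx \<Rightarrow> nat" assume fg: "\<And>i. i \<in> Past (j - 1) \<Longrightarrow> f i = g i"
            have "Sf i f = Sf i g" if "i \<le> k" for i
            proof (rule Sfd)
              fix i' assume "i' \<in> Past i"
              moreover have "Past i \<subseteq> Past (j - 1)" using that kj by (intro Past_mono) simp
              ultimately show "f i' = g i'" using fg by blast
            qed
            then show "Hf f = Hf g" unfolding Hf_def by simp
          next
            show "integrable M (\<lambda>\<omega>. (Hf (fam \<omega>))\<^sup>2)"
            proof (rule Bochner_Integration.integrable_bound)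
              show "integrable M (\<lambda>\<omega>. (Sf k (fam \<omega>))\<^sup>2)" using S_sq[of k] by blast
              show "(\<lambda>\<omega>. (Hf (fam \<omega>))\<^sup>2) \<in> borel_measurable M"
                using measurable_compose[OF fam_meas Hfm] by (simp add: comp_def)
            qed (auto simp: Hf_def)
          qed
          moreover have "(\<integral>\<omega>. G j (fam \<omega>) * Hf (fam \<omega>) \<partial>M) =
            (\<integral>\<omega>. (Sf j (fam \<omega>) - Sf (j - 1) (fam \<omega>)) * (Sf k (fam \<omega>) * indicator {\<omega>\<in>space M. ?lam \<le> \<bar>Sf k (fam \<omega>)\<bar> \<and> (\<forall>i<k. \<bar>Sf i (fam \<omega>)\<bar> < ?lam)} \<omega>) \<partial>M)"
            by (rule Bochner_Integration.integral_cong[OF refl]) (auto simp: dj[simplified] Hf_def indicator_def)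
          ultimately show "(\<integral>\<omega>. (Sf j (fam \<omega>) - Sf (j - 1) (fam \<omega>)) * (Sf k (fam \<omega>) * indicator {\<omega>\<in>space M. ?lam \<le> \<bar>Sf k (fam \<omega>)\<bar> \<and> (\<forall>i<k. \<bar>Sf i (fam \<omega>)\<bar> < ?lam)} \<omega>) \<partial>M) = 0"
            by simp
        qed
        also have "\<dots> = (1 / \<delta>\<^sup>2) * ((\<Sum>k\<in>{1..2^(m+1)}. \<integral>\<omega>. (G k (fam \<omega>))\<^sup>2 \<partial>M) / 4^m)"
        proof -
          have f4: "(4::real)^m = 2^m * 2^m" by (simp flip: power_mult_distrib)
          show ?thesis using S_sq[of ?N] by (simp add: f4 power_mult_distrib field_simps power2_eq_square)
        qed
        finally show ?thesis .
      qed
      show "summable (\<lambda>m. prob {\<omega>\<in>space M. \<exists>k\<le>2^(m+1). \<delta> * 2^m \<le> \<bar>Sf k (fam \<omega>)\<bar>})"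
        by (rule summable_comparison_test'[OF summable_mult[OF summ, of "1 / \<delta>\<^sup>2"], of 0]) (use bnd in auto)
    qed
    then show ?thesis unfolding Sf_def .
  qed
qed

end

context inar begin

definition cc :: "nat \<Rightarrow> nat" where
  "cc k = (if k = s1 then \<theta>1 else 0) + (if k = s2 then \<theta>2 else 0)"

lemma cc_le: "cc k \<le> \<theta>1 + \<theta>2" unfolding cc_def by auto

lemma Yf_Suc: "Yf s1 s2 \<theta>1 \<theta>2 (Suc k) f = (\<Sum>l\<in>{1..Yf s1 s2 \<theta>1 \<theta>2 k f}. f (IXi (Suc k) l)) + f (IEps (Suc k)) + cc (Suc k)"
  by (simp add: cc_def)

lemma Yf_mix:
  assumes k: "k \<ge> 1"
  shows "Yf s1 s2 \<theta>1 \<theta>2 k (mixk k f g) = (\<Sum>l\<in>{1..Yf s1 s2 \<theta>1 \<theta>2 (k - 1) f}. g (IXi k l)) + g (IEps k) + cc k"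
proof -
  obtain k' where k': "k = Suc k'" using k by (cases k) auto
  have "Yf s1 s2 \<theta>1 \<theta>2 k' (mixk k f g) = Yf s1 s2 \<theta>1 \<theta>2 k' f"
    by (rule Yf_dep) (simp add: mixk_past k')
  moreover have "mixk k f g (IXi k l) = g (IXi k l)" if "l \<ge> 1" for l
    using that k unfolding mixk_def by (auto simp: Past_def Blk_def inar_index_set_def)
  moreover have "mixk k f g (IEps k) = g (IEps k)"
    using k unfolding mixk_def by (auto simp: Past_def Blk_def inar_index_set_def)
  ultimately show ?thesis unfolding k' Yf_Suc by simp
qed

lemma fam_xi: "k \<ge> 1 \<Longrightarrow> l \<ge> 1 \<Longrightarrow> fam \<omega> (IXi k l) = xi k l \<omega>"
  by (simp add: fam_def inar_index_set_def)

lemma fam_eps: "k \<ge> 1 \<Longrightarrow> fam \<omega> (IEps k) = eps k \<omega>"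
  by (simp add: fam_def inar_index_set_def)

lemma Y_mix_real:
  assumes k: "k \<ge> 1"
  shows "real (Yf s1 s2 \<theta>1 \<theta>2 k (mixk k f (fam \<omega>'))) =
    Wt k (Yf s1 s2 \<theta>1 \<theta>2 (k - 1) f) \<omega>' + (\<alpha> * real (Yf s1 s2 \<theta>1 \<theta>2 (k - 1) f) + \<mu> + real (cc k))"
proof -
  have "(\<Sum>l\<in>{1..Yf s1 s2 \<theta>1 \<theta>2 (k - 1) f}. fam \<omega>' (IXi k l)) = (\<Sum>l\<in>{1..Yf s1 s2 \<theta>1 \<theta>2 (k - 1) f}. xi k l \<omega>')"
    by (rule sum.cong) (use k in \<open>auto simp: fam_xi\<close>)
  then show ?thesis unfolding Yf_mix[OF k] Wt_def using k by (simp add: fam_eps)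
qed

lemma Y_meas_nat[measurable]: "(\<lambda>\<omega>. Yf s1 s2 \<theta>1 \<theta>2 k (fam \<omega>)) \<in> measurable M (count_space UNIV)"
  using measurable_compose[OF fam_meas meas_Yf_Om] by (simp add: comp_def)

lemma Y_meas_real[measurable]: "(\<lambda>\<omega>. real (Yf s1 s2 \<theta>1 \<theta>2 k (fam \<omega>))) \<in> borel_measurable M"
  using measurable_compose[OF Y_meas_nat, of real borel] by (simp add: comp_def)

lemma mu_nonneg: "\<mu> \<ge> 0"
  unfolding mu_def by (rule integral_nonneg_AE) simp

lemma Wt_shift:
  assumes k: "k \<ge> 1"
  shows "integrable M (\<lambda>\<omega>'. (Wt k y \<omega>' + b)\<^sup>2)"
    and "(\<integral>\<omega>'. (Wt k y \<omega>' + b)\<^sup>2 \<partial>M) = sig2 + real y * (\<alpha> * (1 - \<alpha>)) + b\<^sup>2"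
proof -
  have e: "(\<lambda>\<omega>'. (Wt k y \<omega>' + b)\<^sup>2) = (\<lambda>\<omega>'. (Wt k y \<omega>')\<^sup>2 + 2 * b * Wt k y \<omega>' + b\<^sup>2)"
    by (auto simp: power2_eq_square algebra_simps)
  show "integrable M (\<lambda>\<omega>'. (Wt k y \<omega>' + b)\<^sup>2)"
    unfolding e using Wt_sq(1)[OF k] Wt_int[OF k] by simp
  show "(\<integral>\<omega>'. (Wt k y \<omega>' + b)\<^sup>2 \<partial>M) = sig2 + real y * (\<alpha> * (1 - \<alpha>)) + b\<^sup>2"
    unfolding e using Wt_sq[OF k] Wt_int[OF k] Wt_mean[OF k] by (simp add: prob_space)
qed

definition eta where "eta = (1 - \<alpha>\<^sup>2) / 3"
definition rho where "rho = (1 + eta) * \<alpha>\<^sup>2 + eta"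
definition KK where "KK = sig2 + (1 + 1 / eta) * (\<mu> + real \<theta>1 + real \<theta>2)\<^sup>2 + 1 / (4 * eta)"

lemma eta_pos: "eta > 0"
  unfolding eta_def using alpha by (simp add: power_less_one_iff abs_less_iff)

lemma rho_facts: "0 \<le> rho" "rho < 1"
proof -
  have a2: "\<alpha>\<^sup>2 < 1" "0 \<le> \<alpha>\<^sup>2" using alpha by (auto simp: power_less_one_iff abs_less_iff)
  show "0 \<le> rho" unfolding rho_def using eta_pos a2 by simp
  have "rho = \<alpha>\<^sup>2 + eta * (\<alpha>\<^sup>2 + 1)" unfolding rho_def by (simp add: algebra_simps)
  also have "\<dots> < \<alpha>\<^sup>2 + eta * 3" using eta_pos a2 by (intro add_strict_left_mono mult_strict_left_mono) auto
  also have "\<dots> = 1" unfolding eta_def by (simp add: field_simps)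
  finally show "rho < 1" .
qed

lemma KK_nonneg: "KK \<ge> 0"
  unfolding KK_def using sig2_nonneg eta_pos by simp

lemma young: 
  fixes a b e :: real assumes "e > 0"
  shows "(a + b)\<^sup>2 \<le> (1 + e) * a\<^sup>2 + (1 + 1 / e) * b\<^sup>2"
proof -
  have "0 \<le> (e * a - b)\<^sup>2 / e" using assms by simp
  also have "(e * a - b)\<^sup>2 / e = (1 + e) * a\<^sup>2 + (1 + 1 / e) * b\<^sup>2 - (a + b)\<^sup>2"
    using assms by (simp add: field_simps power2_eq_square)
  finally show ?thesis by simp
qed

lemma step_ineq:
  fixes y :: real assumes y: "y \<ge> 0" and c: "0 \<le> c" "c \<le> real \<theta>1 + real \<theta>2"
  shows "sig2 + y * (\<alpha> * (1 - \<alpha>)) + (\<alpha> * y + \<mu> + c)\<^sup>2 \<le> rho * y\<^sup>2 + KK"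
proof -
  have e: "eta > 0" by (rule eta_pos)
  have 1: "(\<alpha> * y + (\<mu> + c))\<^sup>2 \<le> (1 + eta) * (\<alpha> * y)\<^sup>2 + (1 + 1 / eta) * (\<mu> + c)\<^sup>2"
    by (rule young[OF e])
  have 2: "(\<mu> + c)\<^sup>2 \<le> (\<mu> + real \<theta>1 + real \<theta>2)\<^sup>2"
    using mu_nonneg c by (intro power_mono) auto
  have a1: "\<alpha> * (1 - \<alpha>) \<le> 1" using alpha by (intro mult_le_one) auto
  have 3: "y * (\<alpha> * (1 - \<alpha>)) \<le> y" using a1 y by (rule mult_left_le)
  have 4: "y \<le> eta * y\<^sup>2 + 1 / (4 * eta)"
  proof -
    have "0 \<le> (2 * eta * y - 1)\<^sup>2 / (4 * eta)" using e by simp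
    also have "\<dots> = eta * y\<^sup>2 + 1 / (4 * eta) - y"
      using e by (simp add: field_simps power2_eq_square)
    finally show ?thesis by simp
  qed
  have 5: "(1 + 1 / eta) * (\<mu> + c)\<^sup>2 \<le> (1 + 1 / eta) * (\<mu> + real \<theta>1 + real \<theta>2)\<^sup>2"
    using 2 e by (intro mult_left_mono) auto
  have "sig2 + y * (\<alpha> * (1 - \<alpha>)) + (\<alpha> * y + \<mu> + c)\<^sup>2
      \<le> sig2 + (eta * y\<^sup>2 + 1 / (4 * eta)) + ((1 + eta) * (\<alpha> * y)\<^sup>2 + (1 + 1 / eta) * (\<mu> + real \<theta>1 + real \<theta>2)\<^sup>2)"
    using 1 3 4 5 by (simp add: add.assoc)
  also have "\<dots> = rho * y\<^sup>2 + KK"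
    unfolding rho_def KK_def by (simp add: power_mult_distrib algebra_simps)
  finally show ?thesis .
qed

definition C2 where "C2 = max (\<integral>\<omega>. (real (Y0 \<omega>))\<^sup>2 \<partial>M) (KK / (1 - rho))"

lemma C2_facts: "0 \<le> C2" "rho * C2 + KK \<le> C2"
proof -
  have r: "0 \<le> rho" "rho < 1" by (rule rho_facts)+
  show "0 \<le> C2" unfolding C2_def using KK_nonneg r by (simp add: le_max_iff_disj)
  have "KK \<le> (1 - rho) * C2"
  proof -
    have "KK = (1 - rho) * (KK / (1 - rho))" using r by simp
    also have "\<dots> \<le> (1 - rho) * C2" unfolding C2_def using r by (intro mult_left_mono) auto
    finally show ?thesis .
  qed
  then show "rho * C2 + KK \<le> C2" by (simp add: algebra_simps)
qed

lemma E2_step: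
  assumes k: "k \<ge> 1"
  shows "(\<integral>\<^sup>+\<omega>. ennreal ((real (Y k \<omega>))\<^sup>2) \<partial>M) \<le> (\<integral>\<^sup>+\<omega>. ennreal (rho * (real (Y (k - 1) \<omega>))\<^sup>2 + KK) \<partial>M)"
proof -
  have "(\<integral>\<^sup>+\<omega>. ennreal ((real (Y k \<omega>))\<^sup>2) \<partial>M) =
        (\<integral>\<^sup>+\<omega>. \<integral>\<^sup>+\<omega>'. ennreal ((real (Yf s1 s2 \<theta>1 \<theta>2 k (mixk k (fam \<omega>) (fam \<omega>'))))\<^sup>2) \<partial>M \<partial>M)"
  proof (rule core_nn[OF k, of "\<lambda>f. ennreal ((real (Yf s1 s2 \<theta>1 \<theta>2 k f))\<^sup>2)"])
    show "(\<lambda>f. ennreal ((real (Yf s1 s2 \<theta>1 \<theta>2 k f))\<^sup>2)) \<in> borel_measurable Om"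
      using measurable_compose[OF meas_Yf_Om, of "\<lambda>x. ennreal ((real x)\<^sup>2)" borel] by (simp add: comp_def)
    fix f g :: "inar_idx \<Rightarrow> nat" assume "\<And>i. i \<in> Past k \<Longrightarrow> f i = g i"
    then have "Yf s1 s2 \<theta>1 \<theta>2 k f = Yf s1 s2 \<theta>1 \<theta>2 k g" by (rule Yf_dep)
    then show "ennreal ((real (Yf s1 s2 \<theta>1 \<theta>2 k f))\<^sup>2) = ennreal ((real (Yf s1 s2 \<theta>1 \<theta>2 k g))\<^sup>2)" by (simp only:)
  qed
  also have "\<dots> \<le> (\<integral>\<^sup>+\<omega>. ennreal (rho * (real (Y (k - 1) \<omega>))\<^sup>2 + KK) \<partial>M)"
  proof (rule nn_integral_mono)
    fix \<omega>
    let ?y = "Yf s1 s2 \<theta>1 \<theta>2 (k - 1) (fam \<omega>)"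
    let ?b = "\<alpha> * real ?y + \<mu> + real (cc k)"
    have "(\<integral>\<^sup>+\<omega>'. ennreal ((real (Yf s1 s2 \<theta>1 \<theta>2 k (mixk k (fam \<omega>) (fam \<omega>'))))\<^sup>2) \<partial>M)
        = (\<integral>\<^sup>+\<omega>'. ennreal ((Wt k ?y \<omega>' + ?b)\<^sup>2) \<partial>M)"
      by (simp only: Y_mix_real[OF k])
    also have "\<dots> = ennreal (\<integral>\<omega>'. (Wt k ?y \<omega>' + ?b)\<^sup>2 \<partial>M)"
      by (rule nn_integral_eq_integral[OF Wt_shift(1)[OF k]]) simp
    also have "\<dots> = ennreal (sig2 + real ?y * (\<alpha> * (1 - \<alpha>)) + ?b\<^sup>2)"
      by (simp add: Wt_shift(2)[OF k])
    also have "\<dots> \<le> ennreal (rho * (real ?y)\<^sup>2 + KK)"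
      using step_ineq[of "real ?y" "real (cc k)"] cc_le[of k]
      by (intro ennreal_leI) (simp add: add.assoc)
    finally show "(\<integral>\<^sup>+\<omega>'. ennreal ((real (Yf s1 s2 \<theta>1 \<theta>2 k (mixk k (fam \<omega>) (fam \<omega>'))))\<^sup>2) \<partial>M)
        \<le> ennreal (rho * (real (Y (k - 1) \<omega>))\<^sup>2 + KK)" .
  qed
  finally show ?thesis .
qed

lemma E2_bound: "(\<integral>\<^sup>+\<omega>. ennreal ((real (Y k \<omega>))\<^sup>2) \<partial>M) \<le> ennreal C2"
proof (induction k)
  case 0
  have "(\<integral>\<^sup>+\<omega>. ennreal ((real (Y 0 \<omega>))\<^sup>2) \<partial>M) = (\<integral>\<^sup>+\<omega>. ennreal ((real (Y0 \<omega>))\<^sup>2) \<partial>M)"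
    by (simp add: fam_def inar_index_set_def)
  also have "\<dots> = ennreal (\<integral>\<omega>. (real (Y0 \<omega>))\<^sup>2 \<partial>M)"
    by (rule nn_integral_eq_integral[OF Y0_sq]) simp
  also have "\<dots> \<le> ennreal C2" unfolding C2_def by (intro ennreal_leI) simp
  finally show ?case .
next
  case (Suc k)
  have r: "0 \<le> rho" using rho_facts by simp
  have "(\<integral>\<^sup>+\<omega>. ennreal ((real (Y (Suc k) \<omega>))\<^sup>2) \<partial>M) \<le> (\<integral>\<^sup>+\<omega>. ennreal (rho * (real (Y k \<omega>))\<^sup>2 + KK) \<partial>M)"
    using E2_step[of "Suc k"] by simp
  also have "\<dots> = (\<integral>\<^sup>+\<omega>. ennreal rho * ennreal ((real (Y k \<omega>))\<^sup>2) + ennreal KK \<partial>M)"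
    using r KK_nonneg by (intro nn_integral_cong) (simp add: ennreal_plus ennreal_mult)
  also have "\<dots> = ennreal rho * (\<integral>\<^sup>+\<omega>. ennreal ((real (Y k \<omega>))\<^sup>2) \<partial>M) + ennreal KK"
    by (simp add: nn_integral_add nn_integral_cmult emeasure_space_1)
  also have "\<dots> \<le> ennreal rho * ennreal C2 + ennreal KK"
    using Suc.IH by (intro add_mono mult_left_mono) auto
  also have "\<dots> = ennreal (rho * C2 + KK)"
    using r KK_nonneg C2_facts by (simp add: ennreal_plus ennreal_mult)
  also have "\<dots> \<le> ennreal C2" using C2_facts by (intro ennreal_leI) simp
  finally show ?case .
qed

lemma Y_sq_int: "integrable M (\<lambda>\<omega>. (real (Y k \<omega>))\<^sup>2)"
proof (rule integrableI_bounded)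
  show "(\<lambda>\<omega>. (real (Y k \<omega>))\<^sup>2) \<in> borel_measurable M" by simp
  have "(\<integral>\<^sup>+\<omega>. ennreal (norm ((real (Y k \<omega>))\<^sup>2)) \<partial>M) = (\<integral>\<^sup>+\<omega>. ennreal ((real (Y k \<omega>))\<^sup>2) \<partial>M)" by simp
  also have "\<dots> \<le> ennreal C2" by (rule E2_bound)
  finally show "(\<integral>\<^sup>+\<omega>. ennreal (norm ((real (Y k \<omega>))\<^sup>2)) \<partial>M) < \<infinity>"
    by (simp add: le_less_trans)
qed

lemma Y_sq_bound: "(\<integral>\<omega>. (real (Y k \<omega>))\<^sup>2 \<partial>M) \<le> C2"
proof -
  have "ennreal (\<integral>\<omega>. (real (Y k \<omega>))\<^sup>2 \<partial>M) = (\<integral>\<^sup>+\<omega>. ennreal ((real (Y k \<omega>))\<^sup>2) \<partial>M)"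
    by (rule nn_integral_eq_integral[OF Y_sq_int, symmetric]) simp
  also have "\<dots> \<le> ennreal C2" by (rule E2_bound)
  finally show ?thesis using C2_facts(1) by (simp add: ennreal_le_iff)
qed

end

lemma comp_real_Om: "i \<in> inar_index_set \<Longrightarrow> (\<lambda>f. real (f i)) \<in> borel_measurable Om"
  using measurable_compose[OF meas_comp_Om, of i real borel] by (simp add: comp_def)

context inar begin

abbreviation YF where "YF \<equiv> Yf s1 s2 \<theta>1 \<theta>2"

definition dd :: "nat \<Rightarrow> (inar_idx \<Rightarrow> nat) \<Rightarrow> real" where
  "dd k f = ((\<Sum>l\<in>{1..YF (k - 1) f}. real (f (IXi k l))) - \<alpha> * real (YF (k - 1) f) + real (f (IEps k)) - \<mu>) * real (YF (k - 1) f)"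

definition tr :: "nat \<Rightarrow> (inar_idx \<Rightarrow> nat) \<Rightarrow> real" where
  "tr k f = (if (YF (k - 1) f)^4 \<le> k^3 then 1 else 0)"

definition dt :: "nat \<Rightarrow> (inar_idx \<Rightarrow> nat) \<Rightarrow> real" where
  "dt k f = dd k f * tr k f"

lemma dd_meas: assumes k: "k \<ge> 1" shows "dd k \<in> borel_measurable Om"
proof -
  have h: "(\<lambda>f. ((\<Sum>l\<in>{1..n}. real (f (IXi k l))) - \<alpha> * real n + real (f (IEps k)) - \<mu>) * real n) \<in> borel_measurable Om" for n
  proof -
    have "(\<lambda>f. real (f (IXi k l))) \<in> borel_measurable Om" if "l \<in> {1..n}" for l
      using that k by (intro comp_real_Om) (auto simp: inar_index_set_def)
    moreover have "(\<lambda>f. real (f (IEps k))) \<in> borel_measurable Om"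
      using k by (intro comp_real_Om) (auto simp: inar_index_set_def)
    ultimately show ?thesis by measurable
  qed
  show ?thesis
    unfolding dd_def
    using measurable_compose_countable'[OF h meas_Yf_Om] by simp
qed

lemma tr_meas: "tr k \<in> borel_measurable Om"
proof -
  have "(\<lambda>f. (if (YF (k - 1) f)^4 \<le> k^3 then 1 else 0::real)) = (\<lambda>n. if n^4 \<le> k^3 then 1 else 0) \<circ> YF (k - 1)"
    by (simp add: comp_def)
  then show ?thesis unfolding tr_def using measurable_comp[OF meas_Yf_Om, of "\<lambda>n. if n^4 \<le> k^3 then 1 else 0::real" borel]
    by simp
qed

lemma dt_meas: "k \<ge> 1 \<Longrightarrow> dt k \<in> borel_measurable Om"
  unfolding dt_def using dd_meas tr_meas by (simp add: borel_measurable_times)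

lemma dd_dep: "(\<And>i. i \<in> Past k \<Longrightarrow> f i = g i) \<Longrightarrow> k \<ge> 1 \<Longrightarrow> dd k f = dd k g"
proof -
  assume fg: "\<And>i. i \<in> Past k \<Longrightarrow> f i = g i" and k: "k \<ge> 1"
  have "Past (k - 1) \<subseteq> Past k" by (rule Past_mono) simp
  then have y: "YF (k - 1) f = YF (k - 1) g" using fg by (intro Yf_dep) blast
  have "f (IXi k l) = g (IXi k l)" if "l \<ge> 1" for l using fg[of "IXi k l"] that k by (simp add: Past_def)
  moreover have "f (IEps k) = g (IEps k)" using fg[of "IEps k"] k by (simp add: Past_def)
  ultimately show ?thesis unfolding dd_def y by simp
qed

lemma tr_dep: "(\<And>i. i \<in> Past (k - 1) \<Longrightarrow> f i = g i) \<Longrightarrow> tr k f = tr k g"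
  unfolding tr_def by (subst Yf_dep[of "k - 1" f g]) auto

lemma dt_dep: "(\<And>i. i \<in> Past k \<Longrightarrow> f i = g i) \<Longrightarrow> k \<ge> 1 \<Longrightarrow> dt k f = dt k g"
proof -
  assume fg: "\<And>i. i \<in> Past k \<Longrightarrow> f i = g i" and k: "k \<ge> 1"
  have "Past (k - 1) \<subseteq> Past k" by (rule Past_mono) simp
  then show ?thesis unfolding dt_def using dd_dep[OF fg k] tr_dep[of k f g] fg by auto
qed

lemma dd_mix:
  assumes k: "k \<ge> 1"
  shows "dd k (mixk k f (fam \<omega>')) = Wt k (YF (k - 1) f) \<omega>' * real (YF (k - 1) f)"
    and "tr k (mixk k f g) = tr k f"
proof -
  have y: "YF (k - 1) (mixk k f h) = YF (k - 1) f" for h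
    by (rule Yf_dep) (simp add: mixk_past)
  have "mixk k f (fam \<omega>') (IXi k l) = xi k l \<omega>'" if "l \<ge> 1" for l
    using that k unfolding mixk_def by (auto simp: Past_def Blk_def inar_index_set_def fam_def)
  moreover have "mixk k f (fam \<omega>') (IEps k) = eps k \<omega>'"
    using k unfolding mixk_def by (auto simp: Past_def Blk_def inar_index_set_def fam_def)
  ultimately show "dd k (mixk k f (fam \<omega>')) = Wt k (YF (k - 1) f) \<omega>' * real (YF (k - 1) f)"
    unfolding dd_def Wt_def y by simp
  show "tr k (mixk k f g) = tr k f" unfolding tr_def y ..
qed

lemma dt_zero:
  assumes k: "k \<ge> 1"
  shows "(\<integral>\<omega>'. dt k (mixk k f (fam \<omega>')) \<partial>M) = 0"
proof -
  have "(\<integral>\<omega>'. dt k (mixk k f (fam \<omega>')) \<partial>M) = (\<integral>\<omega>'. Wt k (YF (k - 1) f) \<omega>' * (real (YF (k - 1) f) * tr k f) \<partial>M)"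
    unfolding dt_def dd_mix[OF k] by (simp add: mult.assoc)
  also have "\<dots> = 0" using Wt_mean[OF k] by simp
  finally show ?thesis .
qed

lemma tr_bound:
  assumes k: "k \<ge> 1"
  shows "real (YF (k - 1) f) * tr k f \<le> real k powr (3/4)"
proof (cases "(YF (k - 1) f)^4 \<le> k^3")
  case True
  define y where "y = real (YF (k - 1) f)"
  have y0: "y \<ge> 0" unfolding y_def by simp
  have y4: "y ^ 4 \<le> real k ^ 3" unfolding y_def using True by (simp only: of_nat_power[symmetric] of_nat_le_iff)
  have kp: "real k > 0" using k by simp
  have b: "real k powr 3 = real k ^ 3" using powr_realpow[OF kp, of 3] by simp
  have kk: "(real k ^ 3) powr (1/4) = real k powr (3/4)" unfolding b[symmetric] powr_powr by simp
  have "y \<le> real k powr (3/4)"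
  proof (cases "y = 0")
    case True then show ?thesis by simp
  next
    case False
    then have yp: "y > 0" using y0 by simp
    have a: "y powr 4 = y ^ 4" using powr_realpow[OF yp, of 4] by simp
    have yy: "(y ^ 4) powr (1/4) = y" unfolding a[symmetric] powr_powr using yp by simp
    have "(y ^ 4) powr (1/4) \<le> (real k ^ 3) powr (1/4)" by (rule powr_mono2) (use y4 in simp_all)
    then show ?thesis unfolding yy kk .
  qed
  then show ?thesis using True by (simp add: tr_def y_def)
next
  case False
  then show ?thesis by (simp add: tr_def)
qed

lemma dt_sq:
  assumes k: "k \<ge> 1"
  shows "integrable M (\<lambda>\<omega>. (dt k (fam \<omega>))\<^sup>2)" and "(\<integral>\<omega>. (dt k (fam \<omega>))\<^sup>2 \<partial>M) \<le> (sig2 + real k powr (3/4)) * C2"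
proof -
  have dtm: "(\<lambda>\<omega>. dt k (fam \<omega>)) \<in> borel_measurable M"
    using measurable_compose[OF fam_meas dt_meas[OF k]] by (simp add: comp_def)
  have "(\<integral>\<^sup>+\<omega>. ennreal ((dt k (fam \<omega>))\<^sup>2) \<partial>M) =
        (\<integral>\<^sup>+\<omega>. \<integral>\<^sup>+\<omega>'. ennreal ((dt k (mixk k (fam \<omega>) (fam \<omega>')))\<^sup>2) \<partial>M \<partial>M)"
  proof (rule core_nn[OF k, of "\<lambda>f. ennreal ((dt k f)\<^sup>2)"])
    show "(\<lambda>f. ennreal ((dt k f)\<^sup>2)) \<in> borel_measurable Om" using dt_meas[OF k] by measurable
    fix f g :: "inar_idx \<Rightarrow> nat" assume "\<And>i. i \<in> Past k \<Longrightarrow> f i = g i"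
    then show "ennreal ((dt k f)\<^sup>2) = ennreal ((dt k g)\<^sup>2)" using dt_dep[of k f g] k by simp
  qed
  also have "\<dots> \<le> (\<integral>\<^sup>+\<omega>. ennreal ((sig2 + real k powr (3/4)) * (real (Y (k - 1) \<omega>))\<^sup>2) \<partial>M)"
  proof (rule nn_integral_mono)
    fix \<omega>
    let ?y = "YF (k - 1) (fam \<omega>)"
    let ?c = "real ?y * tr k (fam \<omega>)"
    have e: "(dt k (mixk k (fam \<omega>) (fam \<omega>')))\<^sup>2 = (Wt k ?y \<omega>')\<^sup>2 * ?c\<^sup>2" for \<omega>'
      unfolding dt_def dd_mix[OF k] by (simp add: power_mult_distrib)
    have "(\<integral>\<^sup>+\<omega>'. ennreal ((dt k (mixk k (fam \<omega>) (fam \<omega>')))\<^sup>2) \<partial>M)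
        = ennreal (\<integral>\<omega>'. (Wt k ?y \<omega>')\<^sup>2 * ?c\<^sup>2 \<partial>M)"
      unfolding e by (rule nn_integral_eq_integral) (use Wt_sq(1)[OF k] in simp_all)
    also have "\<dots> = ennreal ((sig2 + real ?y * (\<alpha> * (1 - \<alpha>))) * ?c\<^sup>2)"
      using Wt_sq(2)[OF k] by simp
    also have "\<dots> \<le> ennreal ((sig2 + real k powr (3/4)) * (real ?y)\<^sup>2)"
    proof (rule ennreal_leI)
      have t01: "tr k (fam \<omega>) = 0 \<or> tr k (fam \<omega>) = 1" by (simp add: tr_def)
      have a1: "\<alpha> * (1 - \<alpha>) \<le> 1" "0 \<le> \<alpha> * (1 - \<alpha>)" using alpha by (auto intro: mult_le_one)
      have "real ?y * (\<alpha> * (1 - \<alpha>)) * tr k (fam \<omega>) \<le> real k powr (3/4)"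
      proof -
        have "real ?y * (\<alpha> * (1 - \<alpha>)) * tr k (fam \<omega>) \<le> real ?y * tr k (fam \<omega>)"
        proof -
          have "real ?y * (\<alpha> * (1 - \<alpha>)) \<le> real ?y" using a1(1) by (rule mult_left_le) simp
          then show ?thesis using t01 by auto
        qed
        then show ?thesis using tr_bound[OF k, of "fam \<omega>"] by linarith
      qed
      then have "(sig2 + real ?y * (\<alpha> * (1 - \<alpha>))) * tr k (fam \<omega>) \<le> sig2 + real k powr (3/4)"
        using t01 sig2_nonneg by auto
      then have "(sig2 + real ?y * (\<alpha> * (1 - \<alpha>))) * tr k (fam \<omega>) * (real ?y)\<^sup>2 \<le> (sig2 + real k powr (3/4)) * (real ?y)\<^sup>2"
        by (rule mult_right_mono) simp
      moreover have "?c\<^sup>2 = tr k (fam \<omega>) * (real ?y)\<^sup>2" using t01 by (auto simp: power2_eq_square)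
      ultimately show "(sig2 + real ?y * (\<alpha> * (1 - \<alpha>))) * ?c\<^sup>2 \<le> (sig2 + real k powr (3/4)) * (real ?y)\<^sup>2"
        by (simp add: mult.assoc)
    qed
    finally show "(\<integral>\<^sup>+\<omega>'. ennreal ((dt k (mixk k (fam \<omega>) (fam \<omega>')))\<^sup>2) \<partial>M)
        \<le> ennreal ((sig2 + real k powr (3/4)) * (real (Y (k - 1) \<omega>))\<^sup>2)" .
  qed
  also have "\<dots> = ennreal (sig2 + real k powr (3/4)) * (\<integral>\<^sup>+\<omega>. ennreal ((real (Y (k - 1) \<omega>))\<^sup>2) \<partial>M)"
    using sig2_nonneg by (subst nn_integral_cmult[symmetric]) (auto simp: ennreal_mult)
  also have "\<dots> \<le> ennreal (sig2 + real k powr (3/4)) * ennreal C2"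
    by (intro mult_left_mono E2_bound) simp
  also have "\<dots> = ennreal ((sig2 + real k powr (3/4)) * C2)"
    using sig2_nonneg C2_facts by (simp add: ennreal_mult)
  finally have B: "(\<integral>\<^sup>+\<omega>. ennreal ((dt k (fam \<omega>))\<^sup>2) \<partial>M) \<le> ennreal ((sig2 + real k powr (3/4)) * C2)" .
  show I: "integrable M (\<lambda>\<omega>. (dt k (fam \<omega>))\<^sup>2)"
  proof (rule integrableI_bounded)
    show "(\<lambda>\<omega>. (dt k (fam \<omega>))\<^sup>2) \<in> borel_measurable M" using dtm by simp
    show "(\<integral>\<^sup>+\<omega>. ennreal (norm ((dt k (fam \<omega>))\<^sup>2)) \<partial>M) < \<infinity>"
      using B by (simp add: le_less_trans)
  qed
  have "ennreal (\<integral>\<omega>. (dt k (fam \<omega>))\<^sup>2 \<partial>M) = (\<integral>\<^sup>+\<omega>. ennreal ((dt k (fam \<omega>))\<^sup>2) \<partial>M)"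
    by (rule nn_integral_eq_integral[OF I, symmetric]) simp
  then show "(\<integral>\<omega>. (dt k (fam \<omega>))\<^sup>2 \<partial>M) \<le> (sig2 + real k powr (3/4)) * C2"
  proof -
    have R0: "0 \<le> (sig2 + real k powr (3/4)) * C2" using sig2_nonneg C2_facts by simp
    from B \<open>ennreal _ = _\<close> have "ennreal (\<integral>\<omega>. (dt k (fam \<omega>))\<^sup>2 \<partial>M) \<le> ennreal ((sig2 + real k powr (3/4)) * C2)"
      by simp
    then show ?thesis using R0 by (simp add: ennreal_le_iff)
  qed
qed

end

lemma geom_sum_bound:
  fixes a :: real assumes a: "a \<ge> 0"
  shows "summable (\<lambda>m::nat. real (2^(m+1)) * (a + real (2^(m+1)) powr (3/4)) / 4^m)"
proof -
  define r where "r = (2::real) powr (3/4) / 2"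
  have r0: "0 \<le> r" and r1: "r < 1"
  proof -
    show "0 \<le> r" unfolding r_def by simp
    have "(2::real) powr (3/4) < 2 powr 1" by (rule powr_less_mono) auto
    then show "r < 1" unfolding r_def by simp
  qed
  have eq: "real (2^(m+1)) * (a + real (2^(m+1)) powr (3/4)) / 4^m
      = 2 * a * (1/2)^m + 2 * 2 powr (3/4) * r^m" for m :: nat
  proof -
    have p: "real (2^(m+1)) powr (3/4) = 2 powr (3/4) * (2 powr (3/4))^m"
    proof -
      have "real (2^(m+1)) = (2::real) powr (real (m+1))" by (subst powr_realpow) auto
      then have "real (2^(m+1)) powr (3/4) = 2 powr (real (m+1) * (3/4))" by (simp add: powr_powr)
      also have "\<dots> = 2 powr (3/4 + real m * (3/4))"
        by (rule arg_cong[where f="\<lambda>x. (2::real) powr x"]) (simp add: algebra_simps)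
      also have "\<dots> = 2 powr (3/4) * 2 powr (real m * (3/4))" by (rule powr_add)
      also have "2 powr (real m * (3/4)) = ((2::real) powr (3/4))^m" by (simp add: powr_power)
      finally show ?thesis .
    qed
    have f4: "(4::real)^m = 2^m * 2^m" by (simp flip: power_mult_distrib)
    have rm: "r^m = (2 powr (3/4))^m / 2^m" unfolding r_def by (simp add: power_divide)
    show ?thesis unfolding p rm f4 by (simp add: field_simps power_one_over)
  qed
  show ?thesis unfolding eq
    by (intro summable_add summable_mult summable_geometric) (use r0 r1 in auto)
qed

context inar begin

lemma dt_slln: "AE \<omega> in M. (\<lambda>n. (\<Sum>k\<in>{1..n}. dt k (fam \<omega>)) / real n) \<longlonglongrightarrow> 0"
proof (rule mart_slln)
  show "dt k \<in> borel_measurable Om" if "k \<ge> 1" for k using dt_meas[OF that] .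
  show "dt k f = dt k g" if "k \<ge> 1" "\<And>i. i \<in> Past k \<Longrightarrow> f i = g i" for k f g
    using dt_dep that by blast
  show "(\<integral>\<omega>'. dt k (mixk k (fam \<omega>) (fam \<omega>')) \<partial>M) = 0" if "k \<ge> 1" for k \<omega> using dt_zero[OF that] .
  show "integrable M (\<lambda>\<omega>. (dt k (fam \<omega>))\<^sup>2)" if "k \<ge> 1" for k using dt_sq(1)[OF that] .
  show "summable (\<lambda>m. (\<Sum>k\<in>{1..2^(m+1)}. \<integral>\<omega>. (dt k (fam \<omega>))\<^sup>2 \<partial>M) / 4^m)"
  proof (rule summable_comparison_test'[OF summable_mult[OF geom_sum_bound[OF sig2_nonneg], of C2]])
    fix m :: nat assume "0 \<le> m"
    let ?N = "2^(m+1) :: nat"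
    have nn: "0 \<le> (\<Sum>k\<in>{1..?N}. \<integral>\<omega>. (dt k (fam \<omega>))\<^sup>2 \<partial>M)" by (intro sum_nonneg integral_nonneg_AE) auto
    have "(\<Sum>k\<in>{1..?N}. \<integral>\<omega>. (dt k (fam \<omega>))\<^sup>2 \<partial>M) \<le> (\<Sum>k\<in>{1..?N}. (sig2 + real ?N powr (3/4)) * C2)"
    proof (rule sum_mono)
      fix k assume k: "k \<in> {1..?N}"
      have "(\<integral>\<omega>. (dt k (fam \<omega>))\<^sup>2 \<partial>M) \<le> (sig2 + real k powr (3/4)) * C2" using k dt_sq(2)[of k] by simp
      also have "\<dots> \<le> (sig2 + real ?N powr (3/4)) * C2"
        using k C2_facts by (intro mult_right_mono add_left_mono powr_mono2) (auto simp del: of_nat_power)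
      finally show "(\<integral>\<omega>. (dt k (fam \<omega>))\<^sup>2 \<partial>M) \<le> (sig2 + real ?N powr (3/4)) * C2" .
    qed
    also have "\<dots> = real ?N * (sig2 + real ?N powr (3/4)) * C2" by simp
    finally have le: "(\<Sum>k\<in>{1..?N}. \<integral>\<omega>. (dt k (fam \<omega>))\<^sup>2 \<partial>M) \<le> real ?N * (sig2 + real ?N powr (3/4)) * C2" .
    show "norm ((\<Sum>k\<in>{1..?N}. \<integral>\<omega>. (dt k (fam \<omega>))\<^sup>2 \<partial>M) / 4^m)
        \<le> C2 * (real (2^(m+1)) * (sig2 + real (2^(m+1)) powr (3/4)) / 4^m)"
      using le nn by (simp add: divide_right_mono field_simps del: of_nat_power)
  qed
qed

definition pp where "pp = prob {\<omega>\<in>space M. eps 1 \<omega> \<noteq> 0}"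

definition ee :: "nat \<Rightarrow> (inar_idx \<Rightarrow> nat) \<Rightarrow> real" where
  "ee k f = (if f (IEps k) \<noteq> 0 then 1 else 0) - pp"

lemma pp_pos: "pp > 0" "pp \<le> 1"
  unfolding pp_def using eps_nz by auto

lemma ee_slln: "AE \<omega> in M. (\<lambda>n. (\<Sum>k\<in>{1..n}. ee k (fam \<omega>)) / real n) \<longlonglongrightarrow> 0"
proof (rule mart_slln)
  fix k :: nat assume k: "k \<ge> 1"
  have c: "(\<lambda>f. f (IEps k)) \<in> measurable Om (count_space UNIV)"
    using k by (intro meas_comp_Om) (simp add: inar_index_set_def)
  show em: "ee k \<in> borel_measurable Om"
    unfolding ee_def using measurable_compose[OF c, of "\<lambda>x. (if x \<noteq> 0 then 1 else 0) - pp" borel]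
    by (simp add: comp_def)
  show "ee k f = ee k g" if "\<And>i. i \<in> Past k \<Longrightarrow> f i = g i" for f g
    unfolding ee_def using that[of "IEps k"] k by (simp add: Past_def)
  show "(\<integral>\<omega>'. ee k (mixk k (fam \<omega>) (fam \<omega>')) \<partial>M) = 0" for \<omega>
  proof -
    have "mixk k (fam \<omega>) (fam \<omega>') (IEps k) = eps k \<omega>'" for \<omega>'
      using k unfolding mixk_def by (auto simp: Past_def Blk_def inar_index_set_def fam_def)
    then have "(\<integral>\<omega>'. ee k (mixk k (fam \<omega>) (fam \<omega>')) \<partial>M) = (\<integral>\<omega>'. (\<lambda>x. (if x \<noteq> 0 then 1 else 0) - pp) (eps k \<omega>') \<partial>M)"
      unfolding ee_def by simp
    also have "\<dots> = (\<integral>\<omega>'. (\<lambda>x. (if x \<noteq> 0 then 1 else 0) - pp) (eps 1 \<omega>') \<partial>M)"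
      by (rule eps_integral(2)[OF k])
    also have "\<dots> = (\<integral>\<omega>'. indicator {\<omega>\<in>space M. eps 1 \<omega> \<noteq> 0} \<omega>' - pp \<partial>M)"
      by (rule Bochner_Integration.integral_cong) (auto simp: indicator_def)
    also have "\<dots> = 0"
    proof -
      have s: "{\<omega>\<in>space M. eps 1 \<omega> \<noteq> 0} \<in> sets M" by measurable
      then show ?thesis unfolding pp_def
        by (subst Bochner_Integration.integral_diff) (auto simp: prob_space less_top[symmetric])
    qed
    finally show ?thesis .
  qed
  have b: "\<bar>ee k f\<bar> \<le> 1" for f unfolding ee_def using pp_pos by auto
  have eem: "(\<lambda>\<omega>. ee k (fam \<omega>)) \<in> borel_measurable M"
    using measurable_compose[OF fam_meas em] by (simp add: comp_def)
  show "integrable M (\<lambda>\<omega>. (ee k (fam \<omega>))\<^sup>2)"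
  proof (rule Bochner_Integration.integrable_bound[of _ "\<lambda>_. 1"])
    show "AE x in M. norm ((ee k (fam x))\<^sup>2) \<le> norm (1::real)"
      using b by (auto simp: abs_square_le_1)
  qed (use eem in auto)
next
  have b: "\<bar>ee k f\<bar> \<le> 1" for k f unfolding ee_def using pp_pos by auto
  show "summable (\<lambda>m. (\<Sum>k\<in>{1..2^(m+1)}. \<integral>\<omega>. (ee k (fam \<omega>))\<^sup>2 \<partial>M) / 4^m)"
  proof (rule summable_comparison_test'[OF summable_mult[OF summable_geometric[of "1/2::real"], of 2]])
    fix m :: nat assume "0 \<le> m"
    let ?N = "2^(m+1) :: nat"
    have i1: "(\<integral>\<omega>. (ee k (fam \<omega>))\<^sup>2 \<partial>M) \<le> 1" for k
    proof -
      have "(\<integral>\<omega>. (ee k (fam \<omega>))\<^sup>2 \<partial>M) \<le> (\<integral>\<omega>. 1 \<partial>M)"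
      proof (rule integral_mono')
        show "integrable M (\<lambda>\<omega>. 1::real)" by simp
        fix \<omega> show "(ee k (fam \<omega>))\<^sup>2 \<le> 1" using b[of k "fam \<omega>"] by (simp add: abs_square_le_1)
      qed simp
      then show ?thesis by (simp add: prob_space)
    qed
    have nn: "0 \<le> (\<Sum>k\<in>{1..?N}. \<integral>\<omega>. (ee k (fam \<omega>))\<^sup>2 \<partial>M)" by (intro sum_nonneg integral_nonneg_AE) auto
    have "(\<Sum>k\<in>{1..?N}. \<integral>\<omega>. (ee k (fam \<omega>))\<^sup>2 \<partial>M) \<le> (\<Sum>k\<in>{1..?N}. 1)"
      by (rule sum_mono) (rule i1)
    then have le: "(\<Sum>k\<in>{1..?N}. \<integral>\<omega>. (ee k (fam \<omega>))\<^sup>2 \<partial>M) \<le> 2 * 2^m" by simp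
    have f4: "(4::real)^m = 2^m * 2^m" by (simp flip: power_mult_distrib)
    show "norm ((\<Sum>k\<in>{1..?N}. \<integral>\<omega>. (ee k (fam \<omega>))\<^sup>2 \<partial>M) / 4^m) \<le> 2 * (1/2)^m"
      using le nn by (simp add: f4 field_simps power_one_over)
  qed simp
qed

lemma trunc_eventually: "AE \<omega> in M. eventually (\<lambda>k. tr k (fam \<omega>) = 1) sequentially"
proof -
  define A where "A k = {\<omega>\<in>space M. \<not> (Y (k - 1) \<omega>)^4 \<le> k^3}" for k
  have Am[measurable]: "A k \<in> sets M" for k unfolding A_def by measurable
  have PA: "prob (A k) \<le> C2 * real k powr (-(3/2))" if k: "k \<ge> 1" for k
  proof -
    have kp: "real k > 0" using k by simp
    let ?c = "real k powr (3/2)"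
    have sub: "A k \<subseteq> {\<omega>\<in>space M. (real (Y (k - 1) \<omega>))\<^sup>2 \<ge> ?c}"
    proof safe
      fix \<omega> assume "\<omega> \<in> A k"
      then have h: "real k ^ 3 < real (Y (k - 1) \<omega>) ^ 4" unfolding A_def
        by (simp only: not_le of_nat_power[symmetric] of_nat_less_iff mem_Collect_eq)
      show "?c \<le> (real (Y (k - 1) \<omega>))\<^sup>2"
      proof (rule ccontr)
        assume "\<not> ?c \<le> (real (Y (k - 1) \<omega>))\<^sup>2"
        then have "(real (Y (k - 1) \<omega>))\<^sup>2 < ?c" by simp
        then have "((real (Y (k - 1) \<omega>))\<^sup>2)\<^sup>2 < ?c\<^sup>2" by (intro power_strict_mono) auto
        moreover have "?c\<^sup>2 = real k ^ 3"
        proof -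
          have "?c\<^sup>2 = real k powr (3/2 * 2)" using powr_power[of "real k" "3/2" 2] kp by simp
          also have "\<dots> = real k powr 3" by simp
          also have "\<dots> = real k ^ 3" using powr_realpow[OF kp, of 3] by simp
          finally show ?thesis .
        qed
        moreover have "((real (Y (k - 1) \<omega>))\<^sup>2)\<^sup>2 = real (Y (k - 1) \<omega>) ^ 4"
          by (simp only: power_mult[symmetric]) simp
        ultimately show False using h by linarith
      qed
    qed (simp add: A_def)
    have "prob (A k) \<le> prob {\<omega>\<in>space M. (real (Y (k - 1) \<omega>))\<^sup>2 \<ge> ?c}"
      by (rule finite_measure_mono[OF sub]) measurable
    also have "\<dots> \<le> (\<integral>\<omega>. (real (Y (k - 1) \<omega>))\<^sup>2 \<partial>M) / ?c"
      by (rule integral_Markov_inequality_measure[OF Y_sq_int, of "space M"]) (use kp in auto)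
    also have "\<dots> \<le> C2 / ?c" using Y_sq_bound kp by (intro divide_right_mono) auto
    also have "\<dots> = C2 * inverse (real k powr (3/2))" by (simp only: divide_inverse)
    also have "\<dots> = C2 * real k powr (-(3/2))" by (simp only: powr_minus)
    finally show ?thesis .
  qed
  have summ: "summable (\<lambda>k. prob (A k))"
  proof (rule summable_comparison_test'[of "\<lambda>k. C2 * real k powr (-(3/2))" 1])
    show "summable (\<lambda>k. C2 * real k powr (-(3/2)))"
      by (intro summable_mult) (simp add: summable_real_powr_iff)
    fix k :: nat assume "1 \<le> k" then show "norm (prob (A k)) \<le> C2 * real k powr (-(3/2))" using PA by simp
  qed
  have "AE \<omega> in M. eventually (\<lambda>k. \<omega> \<in> space M - A k) sequentially"
    by (rule borel_cantelli_AE1[OF Am _ summ]) (simp add: less_top[symmetric])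
  then show ?thesis
  proof (rule AE_mp, intro AE_I2 impI)
    fix \<omega> assume "eventually (\<lambda>k. \<omega> \<in> space M - A k) sequentially"
    then show "eventually (\<lambda>k. tr k (fam \<omega>) = 1) sequentially"
      by (rule eventually_mono) (auto simp: A_def tr_def)
  qed
qed

end

lemma ls_identity:
  fixes x z :: "nat \<Rightarrow> real" and K :: "nat set" and a b :: real
  assumes D: "(\<Sum>k\<in>K. (x k)\<^sup>2) \<noteq> 0" and b: "b = (\<Sum>k\<in>K. z k * x k) / (\<Sum>k\<in>K. (x k)\<^sup>2)"
  shows "(\<Sum>k\<in>K. (z k - a * x k)\<^sup>2) = (\<Sum>k\<in>K. (z k - b * x k)\<^sup>2) + (a - b)\<^sup>2 * (\<Sum>k\<in>K. (x k)\<^sup>2)"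
proof -
  define W where "W k = z k * x k - b * (x k)\<^sup>2" for k
  define c where "c = (a - b)\<^sup>2"
  define e where "e = 2 * (a - b)"
  have pt: "(z k - a * x k)\<^sup>2 = ((z k - b * x k)\<^sup>2 + c * (x k)\<^sup>2) - e * W k" for k
    unfolding W_def c_def e_def by (simp add: power2_eq_square algebra_simps)
  have 1: "(\<Sum>k\<in>K. (z k - a * x k)\<^sup>2) = ((\<Sum>k\<in>K. (z k - b * x k)\<^sup>2) + c * (\<Sum>k\<in>K. (x k)\<^sup>2)) - e * (\<Sum>k\<in>K. W k)"
    unfolding pt sum_subtractf sum.distrib sum_distrib_left ..
  have 2: "(\<Sum>k\<in>K. W k) = (\<Sum>k\<in>K. z k * x k) - b * (\<Sum>k\<in>K. (x k)\<^sup>2)"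
    unfolding W_def sum_subtractf sum_distrib_left ..
  have 3: "(\<Sum>k\<in>K. z k * x k) - b * (\<Sum>k\<in>K. (x k)\<^sup>2) = 0" using D unfolding b by simp
  show ?thesis using 1 2 3 unfolding c_def by simp
qed

lemma minimizer:
  fixes y :: "nat \<Rightarrow> real"
  assumes D: "(\<Sum>k\<in>{1..n} - {s1, s2}. (y (k - 1))\<^sup>2) > 0"
  shows "let Q = (\<lambda>(a, t1, t2). inar_Q s1 s2 \<mu> n y a t1 t2);
                 p = (inar_alpha_tilde s1 s2 \<mu> n y, inar_theta_tilde s1 s2 \<mu> n y s1,
                      inar_theta_tilde s1 s2 \<mu> n y s2)
             in (\<forall>q. Q p \<le> Q q) \<and> (\<forall>q. (\<forall>r. Q q \<le> Q r) \<longrightarrow> q = p)"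
proof -
  let ?K = "{1..n} - {s1, s2}"
  define x where "x k = y (k - 1)" for k
  define z where "z k = y k - \<mu>" for k
  define b where "b = inar_alpha_tilde s1 s2 \<mu> n y"
  define Dn where "Dn = (\<Sum>k\<in>?K. (x k)\<^sup>2)"
  have Dn: "Dn > 0" using D unfolding Dn_def x_def .
  have b_eq: "b = (\<Sum>k\<in>?K. z k * x k) / (\<Sum>k\<in>?K. (x k)\<^sup>2)"
    unfolding b_def inar_alpha_tilde_def x_def z_def ..
  have S: "(\<Sum>k\<in>?K. (y k - a * y (k - 1) - \<mu>)\<^sup>2) = (\<Sum>k\<in>?K. (y k - b * y (k - 1) - \<mu>)\<^sup>2) + (a - b)\<^sup>2 * Dn" for a
  proof -
    have "(\<Sum>k\<in>?K. (y k - a * y (k - 1) - \<mu>)\<^sup>2) = (\<Sum>k\<in>?K. (z k - a * x k)\<^sup>2)"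
      unfolding x_def z_def by (simp add: algebra_simps)
    also have "\<dots> = (\<Sum>k\<in>?K. (z k - b * x k)\<^sup>2) + (a - b)\<^sup>2 * Dn"
      unfolding Dn_def by (rule ls_identity) (use Dn b_eq in \<open>simp_all add: Dn_def\<close>)
    also have "(\<Sum>k\<in>?K. (z k - b * x k)\<^sup>2) = (\<Sum>k\<in>?K. (y k - b * y (k - 1) - \<mu>)\<^sup>2)"
      unfolding x_def z_def by (simp add: algebra_simps)
    finally show ?thesis .
  qed
  define r where "r s a = y s - a * y (s - 1) - \<mu>" for s a
  have Qform: "inar_Q s1 s2 \<mu> n y a t1 t2 = (\<Sum>k\<in>?K. (y k - b * y (k - 1) - \<mu>)\<^sup>2) + (a - b)\<^sup>2 * Dn
       + (r s1 a - t1)\<^sup>2 + (r s2 a - t2)\<^sup>2" for a t1 t2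
    unfolding inar_Q_def S[of a] r_def by simp
  let ?Q = "\<lambda>(a, t1, t2). inar_Q s1 s2 \<mu> n y a t1 t2"
  let ?p = "(inar_alpha_tilde s1 s2 \<mu> n y, inar_theta_tilde s1 s2 \<mu> n y s1, inar_theta_tilde s1 s2 \<mu> n y s2)"
  have p_eq: "?p = (b, r s1 b, r s2 b)" unfolding b_def r_def inar_theta_tilde_def by simp
  have Qp: "?Q ?p = (\<Sum>k\<in>?K. (y k - b * y (k - 1) - \<mu>)\<^sup>2)" unfolding p_eq by (simp add: Qform)
  have ge: "?Q q \<ge> ?Q ?p" for q
  proof -
    obtain a t1 t2 where q: "q = (a, t1, t2)" by (cases q) auto
    show ?thesis unfolding Qp q using Dn by (simp add: Qform)
  qed
  have uniq: "q = ?p" if "\<forall>r. ?Q q \<le> ?Q r" for q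
  proof -
    obtain a t1 t2 where q: "q = (a, t1, t2)" by (cases q) auto
    have "?Q q \<le> ?Q ?p" using that by blast
    then have "(a - b)\<^sup>2 * Dn + (r s1 a - t1)\<^sup>2 + (r s2 a - t2)\<^sup>2 \<le> 0"
      unfolding Qp q by (simp add: Qform)
    moreover have "0 \<le> (a - b)\<^sup>2 * Dn" using Dn by simp
    ultimately have "(a - b)\<^sup>2 * Dn = 0" "(r s1 a - t1)\<^sup>2 = 0" "(r s2 a - t2)\<^sup>2 = 0"
      by (smt (verit) zero_le_power2)+
    then have "a = b" "t1 = r s1 a" "t2 = r s2 a" using Dn by auto
    then show ?thesis unfolding q p_eq by simp
  qed
  show ?thesis unfolding Let_def using ge uniq by blast
qed


lemma ratio_to_zero:
  fixes g d :: "nat \<Rightarrow> real" and c :: real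
  assumes g: "(\<lambda>n. g n / real n) \<longlonglongrightarrow> 0" and d: "eventually (\<lambda>n. c * real n \<le> d n) sequentially" and c: "c > 0"
  shows "(\<lambda>n. g n / d n) \<longlonglongrightarrow> 0"
proof (rule Lim_null_comparison)
  show "eventually (\<lambda>n. norm (g n / d n) \<le> (1 / c) * \<bar>g n / real n\<bar>) sequentially"
    using d eventually_ge_at_top[of 1]
  proof eventually_elim
    case (elim n)
    then have n: "real n \<ge> 1" by simp
    have cn: "c * real n > 0" using c n by simp
    then have dpos: "d n > 0" using elim by linarith
    have "norm (g n / d n) = \<bar>g n\<bar> / d n" using dpos by simp
    also have "\<dots> \<le> \<bar>g n\<bar> / (c * real n)" using elim cn by (intro divide_left_mono) auto
    also have "\<dots> = (1 / c) * \<bar>g n / real n\<bar>" using n c by simp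
    finally show ?case .
  qed
  show "(\<lambda>n. (1 / c) * \<bar>g n / real n\<bar>) \<longlonglongrightarrow> 0"
    using tendsto_mult_right_zero[OF tendsto_rabs_zero[OF g], of "1/c"] by simp
qed

context inar begin

lemma Y_ge: "k \<ge> 1 \<Longrightarrow> Y k \<omega> \<ge> eps k \<omega> + cc k"
proof -
  assume k: "k \<ge> 1"
  obtain k' where k': "k = Suc k'" using k by (cases k) auto
  show ?thesis unfolding k' Yf_Suc using fam_eps[of "Suc k'" \<omega>] by simp
qed

lemma cc_s1: "cc s1 \<ge> 1" and cc_s2: "cc s2 \<ge> 1"
  unfolding cc_def using th1 th2 by auto

lemma D_pos:
  assumes n: "n > max s1 s2"
  shows "(\<Sum>k\<in>{1..n} - {s1, s2}. (real (Y (k - 1) \<omega>))\<^sup>2) > 0"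
proof -
  define s where "s = (if Suc s1 \<noteq> s2 then s1 else s2)"
  have s_in: "Suc s \<in> {1..n} - {s1, s2}" unfolding s_def using n s12 by auto
  have "Y s \<omega> \<ge> 1"
  proof -
    have s1': "s \<ge> 1" unfolding s_def using s1 s2 by auto
    have "cc s \<ge> 1" unfolding s_def using cc_s1 cc_s2 by auto
    then show ?thesis using Y_ge[OF s1', of \<omega>] by linarith
  qed
  then have "0 < (real (Y (Suc s - 1) \<omega>))\<^sup>2" by simp
  also have "\<dots> \<le> (\<Sum>k\<in>{1..n} - {s1, s2}. (real (Y (k - 1) \<omega>))\<^sup>2)"
    by (rule member_le_sum[OF s_in]) auto
  finally show ?thesis .
qed

lemma part1: "\<exists>n0. \<forall>n\<ge>n0.
            (let y = (\<lambda>k. real (inar_Y Y0 eps xi s1 s2 \<theta>1 \<theta>2 k \<omega>));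
                 Q = (\<lambda>(a, t1, t2). inar_Q s1 s2 \<mu> n y a t1 t2);
                 p = (inar_alpha_tilde s1 s2 \<mu> n y, inar_theta_tilde s1 s2 \<mu> n y s1,
                      inar_theta_tilde s1 s2 \<mu> n y s2)
             in (\<forall>q. Q p \<le> Q q) \<and> (\<forall>q. (\<forall>r. Q q \<le> Q r) \<longrightarrow> q = p))"
proof (intro exI allI impI)
  fix n assume n: "n \<ge> Suc (max s1 s2)"
  have "(\<Sum>k\<in>{1..n} - {s1, s2}. ((\<lambda>k. real (inar_Y Y0 eps xi s1 s2 \<theta>1 \<theta>2 k \<omega>)) (k - 1))\<^sup>2) > 0"
  proof -
    have "n > max s1 s2" using n by linarith
    from D_pos[OF this, of \<omega>] show ?thesis unfolding Y_eq .
  qed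
  from minimizer[OF this, of \<mu>, unfolded Let_def] show "let y = (\<lambda>k. real (inar_Y Y0 eps xi s1 s2 \<theta>1 \<theta>2 k \<omega>)); Q = (\<lambda>(a, t1, t2). inar_Q s1 s2 \<mu> n y a t1 t2); p = (inar_alpha_tilde s1 s2 \<mu> n y, inar_theta_tilde s1 s2 \<mu> n y s1, inar_theta_tilde s1 s2 \<mu> n y s2) in (\<forall>q. Q p \<le> Q q) \<and> (\<forall>q. (\<forall>r. Q q \<le> Q r) \<longrightarrow> q = p)"
    unfolding Let_def .
qed

lemma dd_fam:
  assumes k: "k \<ge> 1" "k \<noteq> s1" "k \<noteq> s2"
  shows "dd k (fam \<omega>) = (real (Y k \<omega>) - \<mu>) * real (Y (k - 1) \<omega>) - \<alpha> * (real (Y (k - 1) \<omega>))\<^sup>2"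
proof -
  obtain k' where k': "k = Suc k'" using k by (cases k) auto
  have cc0: "cc k = 0" unfolding cc_def using k by auto
  have "real (Y k \<omega>) = (\<Sum>l\<in>{1..Y (k - 1) \<omega>}. real (fam \<omega> (IXi k l))) + real (fam \<omega> (IEps k))"
    unfolding k' Yf_Suc using cc0 k' by simp
  then show ?thesis unfolding dd_def by (simp add: power2_eq_square algebra_simps)
qed

end

declare Yf.simps[simp del]

context inar begin

lemma U_lower:
  "(\<Sum>k\<in>{1..Suc n}. (real (Y (k - 1) \<omega>))\<^sup>2) \<ge> (\<Sum>k\<in>{1..n}. (if eps k \<omega> \<noteq> 0 then 1 else 0::real))"
proof (induction n)
  case 0 then show ?case by simp
next
  case (Suc n)
  have "Y (Suc n) \<omega> \<ge> eps (Suc n) \<omega>" using Y_ge[of "Suc n" \<omega>] by simp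
  then have "(if eps (Suc n) \<omega> \<noteq> 0 then 1 else 0::real) \<le> (real (Y (Suc n) \<omega>))\<^sup>2"
  proof (cases "eps (Suc n) \<omega> = 0")
    case False
    then have "real (Y (Suc n) \<omega>) \<ge> 1" using \<open>Y (Suc n) \<omega> \<ge> eps (Suc n) \<omega>\<close> by linarith
    then have "1 \<le> (real (Y (Suc n) \<omega>))\<^sup>2" by (metis one_le_power)
    then show ?thesis using False by simp
  qed simp
  then show ?case using Suc.IH by (simp add: sum.cl_ivl_Suc[of _ 1 "Suc n"])
qed

lemma conv_det:
  assumes h1: "(\<lambda>n. (\<Sum>k\<in>{1..n}. dt k (fam \<omega>)) / real n) \<longlonglongrightarrow> 0"
    and h2: "eventually (\<lambda>k. tr k (fam \<omega>) = 1) sequentially"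
    and h3: "(\<lambda>n. (\<Sum>k\<in>{1..n}. ee k (fam \<omega>)) / real n) \<longlonglongrightarrow> 0"
  shows "(\<lambda>n. inar_alpha_tilde s1 s2 \<mu> n (\<lambda>k. real (Y k \<omega>))) \<longlonglongrightarrow> \<alpha>"
proof -
  define y where "y k = real (Y k \<omega>)" for k
  define R where "R n = (\<Sum>k\<in>{1..n}. dd k (fam \<omega>))" for n
  define K where "K n = {1..n} - {s1, s2}" for n
  define D where "D n = (\<Sum>k\<in>K n. (y (k - 1))\<^sup>2)" for n
  define Nn where "Nn n = (\<Sum>k\<in>{1..n}. (if eps k \<omega> \<noteq> 0 then 1 else 0::real))" for n
  obtain K0 where K0: "\<And>k. k \<ge> K0 \<Longrightarrow> tr k (fam \<omega>) = 1" using h2 unfolding eventually_sequentially by blast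
  define E where "E = (\<Sum>k\<in>{1..K0}. dd k (fam \<omega>) * (1 - tr k (fam \<omega>)))"
  have RE: "R n = (\<Sum>k\<in>{1..n}. dt k (fam \<omega>)) + E" if n: "n \<ge> K0" for n
  proof -
    have "R n = (\<Sum>k\<in>{1..n}. dt k (fam \<omega>)) + (\<Sum>k\<in>{1..n}. dd k (fam \<omega>) * (1 - tr k (fam \<omega>)))"
      unfolding R_def dt_def by (simp add: sum.distrib[symmetric] algebra_simps)
    also have "(\<Sum>k\<in>{1..n}. dd k (fam \<omega>) * (1 - tr k (fam \<omega>))) = E"
    proof -
      have "(\<Sum>k\<in>{1..n}. dd k (fam \<omega>) * (1 - tr k (fam \<omega>))) = (\<Sum>k\<in>{1..K0}. dd k (fam \<omega>) * (1 - tr k (fam \<omega>)))"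
      proof (rule sum.mono_neutral_right)
        show "{1..K0} \<subseteq> {1..n}" using n by auto
        show "\<forall>k\<in>{1..n} - {1..K0}. dd k (fam \<omega>) * (1 - tr k (fam \<omega>)) = 0"
        proof
          fix k assume "k \<in> {1..n} - {1..K0}"
          then have "k \<ge> K0" by auto
          then show "dd k (fam \<omega>) * (1 - tr k (fam \<omega>)) = 0" using K0 by simp
        qed
      qed simp
      then show ?thesis unfolding E_def .
    qed
    finally show ?thesis .
  qed
  have Ra: "(\<lambda>n. R n / real n) \<longlonglongrightarrow> 0"
  proof -
    have "(\<lambda>n. (\<Sum>k\<in>{1..n}. dt k (fam \<omega>)) / real n + E / real n) \<longlonglongrightarrow> 0 + 0"
      by (intro tendsto_add h1 tendsto_divide_0[OF tendsto_const] filterlim_at_top_imp_at_infinity filterlim_real_sequentially)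
    moreover have "eventually (\<lambda>n. (\<Sum>k\<in>{1..n}. dt k (fam \<omega>)) / real n + E / real n = R n / real n) sequentially"
      using eventually_ge_at_top[of K0] by eventually_elim (simp add: RE add_divide_distrib)
    ultimately show ?thesis by (simp add: Lim_transform_eventually)
  qed
  have Nb: "(\<lambda>n. Nn n / real n) \<longlonglongrightarrow> pp"
  proof -
    have "(\<lambda>n. (\<Sum>k\<in>{1..n}. ee k (fam \<omega>)) / real n + pp) \<longlonglongrightarrow> 0 + pp"
      by (intro tendsto_add h3 tendsto_const)
    moreover have "eventually (\<lambda>n. (\<Sum>k\<in>{1..n}. ee k (fam \<omega>)) / real n + pp = Nn n / real n) sequentially"
      using eventually_ge_at_top[of 1]
    proof eventually_elim
      case (elim n)
      have "(\<Sum>k\<in>{1..n}. ee k (fam \<omega>)) = Nn n - real n * pp"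
        unfolding ee_def Nn_def by (simp add: sum_subtractf fam_eps)
      then show ?case using elim by (simp add: field_simps)
    qed
    ultimately show ?thesis by (simp add: Lim_transform_eventually)
  qed
  define c0 where "c0 = (y (s1 - 1))\<^sup>2 + (y (s2 - 1))\<^sup>2"
  have Dlow: "D n \<ge> Nn n - 1 - c0" if n: "n \<ge> max s1 s2" for n
  proof -
    have sub: "{s1, s2} \<subseteq> {1..n}" using n s1 s2 by auto
    have "D n = (\<Sum>k\<in>{1..n}. (y (k - 1))\<^sup>2) - (\<Sum>k\<in>{s1, s2}. (y (k - 1))\<^sup>2)"
      unfolding D_def K_def by (rule sum_diff[OF _ sub]) simp
    also have "(\<Sum>k\<in>{s1, s2}. (y (k - 1))\<^sup>2) = c0" unfolding c0_def using s12 by simp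
    finally have Deq: "D n = (\<Sum>k\<in>{1..n}. (y (k - 1))\<^sup>2) - c0" .
    obtain n' where n': "n = Suc n'" using n s1 by (cases n) auto
    have "(\<Sum>k\<in>{1..n}. (y (k - 1))\<^sup>2) \<ge> Nn n'" unfolding n' y_def Nn_def by (rule U_lower)
    moreover have "Nn n \<le> Nn n' + 1" unfolding n' Nn_def by (simp add: sum.cl_ivl_Suc)
    ultimately show ?thesis using Deq by linarith
  qed
  have ppos: "pp > 0" using pp_pos by simp
  have Dlin: "eventually (\<lambda>n. (pp / 2) * real n \<le> D n) sequentially"
  proof -
    have "(\<lambda>n. Nn n / real n - (1 + c0) / real n) \<longlonglongrightarrow> pp - 0"
      by (intro tendsto_diff Nb tendsto_divide_0[OF tendsto_const] filterlim_at_top_imp_at_infinity filterlim_real_sequentially)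
    then have "eventually (\<lambda>n. Nn n / real n - (1 + c0) / real n > pp / 2) sequentially"
      using ppos by (intro order_tendstoD(1)) auto
    then show ?thesis using eventually_ge_at_top[of "max s1 s2 + 1"]
    proof eventually_elim
      case (elim n)
      then have np: "real n > 0" by simp
      have "pp / 2 * real n < (Nn n / real n - (1 + c0) / real n) * real n"
        using elim np by (intro mult_strict_right_mono) auto
      also have "\<dots> = Nn n - 1 - c0" using np by (simp add: field_simps)
      also have "\<dots> \<le> D n" using elim by (intro Dlow) linarith
      finally show ?case by simp
    qed
  qed
  define g where "g n = R n - dd s1 (fam \<omega>) - dd s2 (fam \<omega>)" for n
  have ga: "(\<lambda>n. g n / real n) \<longlonglongrightarrow> 0"
  proof -
    have "(\<lambda>n. R n / real n - (dd s1 (fam \<omega>) + dd s2 (fam \<omega>)) / real n) \<longlonglongrightarrow> 0 - 0"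
      by (intro tendsto_diff Ra tendsto_divide_0[OF tendsto_const] filterlim_at_top_imp_at_infinity filterlim_real_sequentially)
    moreover have "R n / real n - (dd s1 (fam \<omega>) + dd s2 (fam \<omega>)) / real n = g n / real n" for n
      unfolding g_def by (simp add: diff_divide_distrib add_divide_distrib)
    ultimately show ?thesis by simp
  qed
  have gD: "(\<lambda>n. g n / D n) \<longlonglongrightarrow> 0" by (rule ratio_to_zero[OF ga Dlin]) (use ppos in simp)
  have eq: "eventually (\<lambda>n. \<alpha> + g n / D n = inar_alpha_tilde s1 s2 \<mu> n (\<lambda>k. real (Y k \<omega>))) sequentially"
    using eventually_ge_at_top[of "max s1 s2 + 1"]
  proof eventually_elim
    case (elim n)
    have "n > max s1 s2" using elim by linarith
    from D_pos[OF this, of \<omega>] have Dp: "D n > 0" unfolding D_def K_def y_def .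
    have sub: "{s1, s2} \<subseteq> {1..n}" using elim s1 s2 by auto
    have "(\<Sum>k\<in>K n. dd k (fam \<omega>)) = R n - (\<Sum>k\<in>{s1, s2}. dd k (fam \<omega>))"
      unfolding R_def K_def by (rule sum_diff[OF _ sub]) simp
    also have "\<dots> = g n" unfolding g_def using s12 by simp
    finally have 1: "(\<Sum>k\<in>K n. dd k (fam \<omega>)) = g n" .
    have "(\<Sum>k\<in>K n. (y k - \<mu>) * y (k - 1)) = (\<Sum>k\<in>K n. dd k (fam \<omega>) + \<alpha> * (y (k - 1))\<^sup>2)"
      by (rule sum.cong[OF refl]) (auto simp: K_def dd_fam y_def)
    also have "\<dots> = g n + \<alpha> * D n" unfolding 1[symmetric] D_def by (simp add: sum.distrib sum_distrib_left)
    finally have 2: "(\<Sum>k\<in>K n. (y k - \<mu>) * y (k - 1)) = g n + \<alpha> * D n" .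
    have "inar_alpha_tilde s1 s2 \<mu> n (\<lambda>k. real (Y k \<omega>)) = (g n + \<alpha> * D n) / D n"
    proof -
      have "inar_alpha_tilde s1 s2 \<mu> n (\<lambda>k. real (Y k \<omega>)) = (\<Sum>k\<in>K n. (y k - \<mu>) * y (k - 1)) / D n"
        unfolding inar_alpha_tilde_def D_def K_def y_def ..
      then show ?thesis unfolding 2 .
    qed
    also have "\<dots> = \<alpha> + g n / D n" using Dp by (simp add: field_simps)
    finally show ?case by simp
  qed
  have "(\<lambda>n. \<alpha> + g n / D n) \<longlonglongrightarrow> \<alpha> + 0" by (intro tendsto_add tendsto_const gD)
  then show ?thesis using eq by (simp add: Lim_transform_eventually)
qed

end

theorem theorem4p4p1:
  fixes M :: "'a measure"
    and Y0 :: "'a \<Rightarrow> nat" and eps :: "nat \<Rightarrow> 'a \<Rightarrow> nat" and xi :: "nat \<Rightarrow> nat \<Rightarrow> 'a \<Rightarrow> nat"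
    and \<alpha> :: real and \<mu> :: real and s1 s2 \<theta>1 \<theta>2 :: nat
  assumes "prob_space M"
    and "\<alpha> \<in> {0<..<1}"
    and "s1 \<ge> 1" and "s2 \<ge> 1" and "s1 \<noteq> s2" and "\<theta>1 \<ge> 1" and "\<theta>2 \<ge> 1"
    and indep: "prob_space.indep_vars M (\<lambda>_. count_space UNIV) (inar_family Y0 eps xi) inar_index_set"
    and eps_ident: "\<And>k. k \<ge> 1 \<Longrightarrow> distr M (count_space UNIV) (eps k) = distr M (count_space UNIV) (eps 1)"
    and eps_sq: "integrable M (\<lambda>\<omega>. (real (eps 1 \<omega>))\<^sup>2)"
    and eps_nz: "measure M {\<omega> \<in> space M. eps 1 \<omega> \<noteq> 0} > 0"
    and mu_def: "\<mu> = integral\<^sup>L M (\<lambda>\<omega>. real (eps 1 \<omega>))"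
    and xi_bern: "\<And>k j. k \<ge> 1 \<Longrightarrow> j \<ge> 1 \<Longrightarrow>
        distr M (count_space UNIV) (xi k j) = measure_pmf (map_pmf (\<lambda>b. if b then 1 else 0) (bernoulli_pmf \<alpha>))"
    and Y0_sq: "integrable M (\<lambda>\<omega>. (real (Y0 \<omega>))\<^sup>2)"
  shows "(AE \<omega> in M. \<exists>n0. \<forall>n\<ge>n0.
            (let y = (\<lambda>k. real (inar_Y Y0 eps xi s1 s2 \<theta>1 \<theta>2 k \<omega>));
                 Q = (\<lambda>(a, t1, t2). inar_Q s1 s2 \<mu> n y a t1 t2);
                 p = (inar_alpha_tilde s1 s2 \<mu> n y, inar_theta_tilde s1 s2 \<mu> n y s1,
                      inar_theta_tilde s1 s2 \<mu> n y s2)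
             in (\<forall>q. Q p \<le> Q q) \<and> (\<forall>q. (\<forall>r. Q q \<le> Q r) \<longrightarrow> q = p)))
       \<and> (AE \<omega> in M.
            let y = (\<lambda>k. real (inar_Y Y0 eps xi s1 s2 \<theta>1 \<theta>2 k \<omega>)) in
            (\<lambda>n. inar_alpha_tilde s1 s2 \<mu> n y) \<longlonglongrightarrow> \<alpha>
          \<and> (\<lambda>n. inar_theta_tilde s1 s2 \<mu> n y s1) \<longlonglongrightarrow> y s1 - \<alpha> * y (s1 - 1) - \<mu>
          \<and> (\<lambda>n. inar_theta_tilde s1 s2 \<mu> n y s2) \<longlonglongrightarrow> y s2 - \<alpha> * y (s2 - 1) - \<mu>)"
proof -
  interpret I: inar M Y0 eps xi \<alpha> \<mu> s1 s2 \<theta>1 \<theta>2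
    by (intro inar.intro inar_axioms.intro; (fact assms)?)
  have A: "AE \<omega> in M. \<exists>n0. \<forall>n\<ge>n0.
            (let y = (\<lambda>k. real (inar_Y Y0 eps xi s1 s2 \<theta>1 \<theta>2 k \<omega>));
                 Q = (\<lambda>(a, t1, t2). inar_Q s1 s2 \<mu> n y a t1 t2);
                 p = (inar_alpha_tilde s1 s2 \<mu> n y, inar_theta_tilde s1 s2 \<mu> n y s1,
                      inar_theta_tilde s1 s2 \<mu> n y s2)
             in (\<forall>q. Q p \<le> Q q) \<and> (\<forall>q. (\<forall>r. Q q \<le> Q r) \<longrightarrow> q = p))"
    by (rule AE_I2) (rule I.part1)
  have B: "AE \<omega> in M.
            let y = (\<lambda>k. real (inar_Y Y0 eps xi s1 s2 \<theta>1 \<theta>2 k \<omega>)) in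
            (\<lambda>n. inar_alpha_tilde s1 s2 \<mu> n y) \<longlonglongrightarrow> \<alpha>
          \<and> (\<lambda>n. inar_theta_tilde s1 s2 \<mu> n y s1) \<longlonglongrightarrow> y s1 - \<alpha> * y (s1 - 1) - \<mu>
          \<and> (\<lambda>n. inar_theta_tilde s1 s2 \<mu> n y s2) \<longlonglongrightarrow> y s2 - \<alpha> * y (s2 - 1) - \<mu>"
    using I.dt_slln I.trunc_eventually I.ee_slln
  proof eventually_elim
    case (elim \<omega>)
    have yeq: "(\<lambda>k. real (inar_Y Y0 eps xi s1 s2 \<theta>1 \<theta>2 k \<omega>)) = (\<lambda>k. real (I.Y k \<omega>))"
      by (simp add: I.Y_eq)
    have a: "(\<lambda>n. inar_alpha_tilde s1 s2 \<mu> n (\<lambda>k. real (I.Y k \<omega>))) \<longlonglongrightarrow> \<alpha>"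
      by (rule I.conv_det) (use elim in auto)
    have t: "(\<lambda>n. inar_theta_tilde s1 s2 \<mu> n (\<lambda>k. real (I.Y k \<omega>)) s) \<longlonglongrightarrow> real (I.Y s \<omega>) - \<alpha> * real (I.Y (s - 1) \<omega>) - \<mu>" for s
      unfolding inar_theta_tilde_def by (intro tendsto_intros a)
    show ?case unfolding yeq Let_def using a t by simp
  qed
  show ?thesis using A B by (rule conjI)
qed


end
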